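(* Assume $\tau_h\le(1+1/(3\boldsymbol\kappa^2))^{1/4}$ and $\theta_h\le1/(4\boldsymbol\kappa)$. Then for every $u:\Omega_h\to\mathbb R$, $$\mathcal F'_h(u)\le17\,\mathcal F_h(u).$$
   Context: Let $\mathbf D:\mathbb R^2\to S_2^+$ be continuous and $\mathbb Z^2$-periodic. Set $\mathbf M(z):=\det(\mathbf D(z))^{1/2}\mathbf D(z)^{-1}$, $\|e\|_M:=\sqrt{\langle e,Me\rangle}$, $\kappa(M):=\sqrt{\|M\|\|M^{-1}\|}$, and $\boldsymbol\kappa:=\max_z\kappa(\mathbf D(z))$. Let $h=1/n$ and $\Omega_h:=[0,1)^2\cap h\mathbb Z^2$. Functions on $\Omega_h$ are extended $\mathbb Z^2$-periodically to $h\mathbb Z^2$. Constants: $\tau(p,q)$ is the least $\tau\ge1$ with $\tau^{-2}\mathbf M(p)\le\mathbf M(q)\le\tau^2\mathbf M(p)$. For any $h>0$, $\tau_h:=\max\{\tau(p,q):\|p-q\|\le2\boldsymbol\kappa h\}$, $\theta_h:=\boldsymbol\kappa(3+9\tau_{2h}^2)(\tau_{2h}^2-1)$, and $\theta_0:=1/(4\boldsymbol\kappa)$. Reduced bases: an $M$-reduced basis is a basis $(e_1,e_2)$ of $\mathbb Z^2$ with $\|e_1\|_M$ minimal over $\mathbb Z^2\setminus\{0\}$ and $\|e_2\|_M$ minimal over $\mathbb Z^2\setminus e_1\mathbb Z$; $\mu(M):=|\langle e_1,Me_2\rangle|$. $V(p):=\{\pm e_0,\pm e_1,\pm e_2\}$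 for an $\mathbf M(p)$-obtuse superbase $(e_0,e_1,e_2)$ of $\mathbb Z^2$ (sum zero, $(e_1,e_2)$ basis, pairwise $\mathbf M(p)$-scalar products $\le0$). Stencils: if $\mu(\mathbf M(p))\le\theta_0$, set $W(p):=\{\pm e,\pm f\}$ and $W'(p):=\{\pm e,\pm f,\pm(e+f),\pm(e-f)\}$ for an $\mathbf M(p)$-reduced basis $(e,f)$ (independent of the choice). Otherwise set $W(p):=W'(p):=V(p)$. Energies: $$\mathcal F_h(u):=\sum_{z\in\Omega_h}\sum_{g\in W(z)}|u(z+hg)-u(z)|^2,\qquad \mathcal F'_h(u):=\sum_{z\in\Omega_h}\sum_{g\in W'(z)}|u(z+hg)-u(z)|^2 .$$ *)

theory Defs
  imports "HOL-Analysis.Analysis"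
begin

definition S2plus :: "(real^2^2) set" where
  "S2plus = {A. transpose A = A \<and> (\<forall>x::real^2. x \<noteq> 0 \<longrightarrow> 0 < x \<bullet> (A *v x))}"

definition Zvec :: "(real^2) set" where
  "Zvec = {v. \<forall>i. v $ i \<in> \<int>}"

definition Mof :: "(real^2 \<Rightarrow> real^2^2) \<Rightarrow> real^2 \<Rightarrow> real^2^2" where
  "Mof D z = sqrt (det (D z)) *\<^sub>R matrix_inv (D z)"

definition Mnorm :: "real^2^2 \<Rightarrow> real^2 \<Rightarrow> real" where
  "Mnorm M e = sqrt (e \<bullet> (M *v e))"

definition cond_num :: "real^2^2 \<Rightarrow> real" where
  "cond_num M = sqrt (onorm ((*v) M) * onorm ((*v) (matrix_inv M)))"

definition kappa_bold :: "(real^2 \<Rightarrow> real^2^2) \<Rightarrow> real" where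
  "kappa_bold D = Sup (range (\<lambda>z. cond_num (D z)))"

definition loewner_le :: "real^2^2 \<Rightarrow> real^2^2 \<Rightarrow> bool" where
  "loewner_le A B \<longleftrightarrow> (\<forall>x::real^2. x \<bullet> (A *v x) \<le> x \<bullet> (B *v x))"

definition tau_pq :: "(real^2 \<Rightarrow> real^2^2) \<Rightarrow> real^2 \<Rightarrow> real^2 \<Rightarrow> real" where
  "tau_pq D p q = (LEAST t::real. 1 \<le> t \<and>
      loewner_le ((1 / t\<^sup>2) *\<^sub>R Mof D p) (Mof D q) \<and>
      loewner_le (Mof D q) (t\<^sup>2 *\<^sub>R Mof D p))"

definition tau_h :: "(real^2 \<Rightarrow> real^2^2) \<Rightarrow> real \<Rightarrow> real" where
  "tau_h D h = Sup {tau_pq D p q | p q. norm (p - q) \<le> 2 * kappa_bold D * h}"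

definition theta_h :: "(real^2 \<Rightarrow> real^2^2) \<Rightarrow> real \<Rightarrow> real" where
  "theta_h D h = kappa_bold D * (3 + 9 * (tau_h D (2 * h))\<^sup>2) * ((tau_h D (2 * h))\<^sup>2 - 1)"

definition theta_0 :: "(real^2 \<Rightarrow> real^2^2) \<Rightarrow> real" where
  "theta_0 D = 1 / (4 * kappa_bold D)"

definition is_Zbasis :: "real^2 \<Rightarrow> real^2 \<Rightarrow> bool" where
  "is_Zbasis e1 e2 \<longleftrightarrow> e1 \<in> Zvec \<and> e2 \<in> Zvec \<and> \<bar>e1 $ 1 * e2 $ 2 - e1 $ 2 * e2 $ 1\<bar> = 1"

definition reduced_basis :: "real^2^2 \<Rightarrow> real^2 \<Rightarrow> real^2 \<Rightarrow> bool" where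
  "reduced_basis M e1 e2 \<longleftrightarrow> is_Zbasis e1 e2 \<and>
     (\<forall>v \<in> Zvec - {0}. Mnorm M e1 \<le> Mnorm M v) \<and>
     (\<forall>v \<in> Zvec - range (\<lambda>k::int. of_int k *\<^sub>R e1). Mnorm M e2 \<le> Mnorm M v)"

definition mu :: "real^2^2 \<Rightarrow> real" where
  "mu M = (case (SOME b. reduced_basis M (fst b) (snd b)) of (e1, e2) \<Rightarrow> \<bar>e1 \<bullet> (M *v e2)\<bar>)"

definition obtuse_superbase :: "real^2^2 \<Rightarrow> real^2 \<Rightarrow> real^2 \<Rightarrow> real^2 \<Rightarrow> bool" where
  "obtuse_superbase M e0 e1 e2 \<longleftrightarrow> e0 + e1 + e2 = 0 \<and> is_Zbasis e1 e2 \<and>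
     e0 \<bullet> (M *v e1) \<le> 0 \<and> e1 \<bullet> (M *v e2) \<le> 0 \<and> e0 \<bullet> (M *v e2) \<le> 0"

text \<open>Stencils; V is a chosen obtuse-superbase stencil V(p).\<close>
definition stencilW :: "(real^2 \<Rightarrow> real^2^2) \<Rightarrow> (real^2 \<Rightarrow> (real^2) set) \<Rightarrow> real^2 \<Rightarrow> (real^2) set" where
  "stencilW D V p = (if mu (Mof D p) \<le> theta_0 D then
      (case (SOME b. reduced_basis (Mof D p) (fst b) (snd b)) of (e, f) \<Rightarrow> {e, -e, f, -f})
    else V p)"

definition stencilW' :: "(real^2 \<Rightarrow> real^2^2) \<Rightarrow> (real^2 \<Rightarrow> (real^2) set) \<Rightarrow> real^2 \<Rightarrow> (real^2) set" where
  "stencilW' D V p = (if mu (Mof D p) \<le> theta_0 D then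
      (case (SOME b. reduced_basis (Mof D p) (fst b) (snd b)) of (e, f) \<Rightarrow>
         {e, -e, f, -f, e + f, -(e + f), e - f, -(e - f)})
    else V p)"

definition Omega :: "real \<Rightarrow> (real^2) set" where
  "Omega h = {z. \<forall>i. 0 \<le> z $ i \<and> z $ i < 1 \<and> z $ i / h \<in> \<int>}"

definition energy :: "(real^2 \<Rightarrow> (real^2) set) \<Rightarrow> real \<Rightarrow> (real^2 \<Rightarrow> real) \<Rightarrow> real" where
  "energy W h u = (\<Sum>z \<in> Omega h. \<Sum>g \<in> W z. (u (z + h *\<^sub>R g) - u z)\<^sup>2)"

end

theory Submission
  imports Defs
begin


lemma inner2: "(x::real^2) \<bullet> y = x$1*y$1 + x$2*y$2"
  by (simp add: inner_vec_def sum_2)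
lemma mv2: "((M::real^2^2) *v x)$i = M$i$1*x$1 + M$i$2*x$2"
  by (simp add: matrix_vector_mult_def sum_2)
lemma mm2: "((A::real^2^2) ** B)$i$j = A$i$1*B$1$j + A$i$2*B$2$j"
  by (simp add: matrix_matrix_mult_def sum_2)
lemma norm2sq: "(norm (x::real^2))^2 = x$1^2 + x$2^2"
  unfolding power2_norm_eq_inner inner2 by (simp add: power2_eq_square)

lemma vec2_eq: "(x::'a^2) = y \<longleftrightarrow> x$1 = y$1 \<and> x$2 = y$2"
  by (simp add: vec_eq_iff forall_2)

lemma minv2:
  fixes A :: "real^2^2"
  assumes d: "A$1$1*A$2$2 - A$1$2*A$2$1 \<noteq> 0"
  defines "dd \<equiv> A$1$1*A$2$2 - A$1$2*A$2$1"
  shows "matrix_inv A = vector[vector[A$2$2/dd, -A$1$2/dd], vector[-A$2$1/dd, A$1$1/dd]]"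
proof -
  let ?B = "vector[vector[A$2$2/dd, -A$1$2/dd], vector[-A$2$1/dd, A$1$1/dd]] :: real^2^2"
  have dd: "dd \<noteq> 0" using d dd_def by simp
  have AB: "A ** ?B = mat 1" using dd
    apply (simp add: vec2_eq mm2 mat_def)
    apply (simp add: divide_simps)
    apply (simp add: dd_def algebra_simps)
    done
  have BA: "?B ** A = mat 1" using dd
    apply (simp add: vec2_eq mm2 mat_def)
    apply (simp add: divide_simps)
    apply (simp add: dd_def algebra_simps)
    done
  have ex: "\<exists>X. A ** X = mat 1 \<and> X ** A = mat 1" using AB BA by blast
  obtain X where X: "X = matrix_inv A" by simp
  have "A ** X = mat 1 \<and> X ** A = mat 1"
    unfolding X matrix_inv_def by (rule someI_ex[OF ex])
  then have "X = ?B"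
  proof -
    have "X = (?B ** A) ** X" using BA by (simp add: matrix_mul_lid)
    also have "\<dots> = ?B ** (A ** X)" by (simp add: matrix_mul_assoc)
    also have "\<dots> = ?B" using \<open>A ** X = mat 1 \<and> X ** A = mat 1\<close> by (simp add: matrix_mul_rid)
    finally show ?thesis .
  qed
  then show ?thesis using X by simp
qed



definition bil :: "real^2^2 \<Rightarrow> real^2 \<Rightarrow> real^2 \<Rightarrow> real" where
  "bil M x y = x \<bullet> (M *v y)"
definition qf :: "real^2^2 \<Rightarrow> real^2 \<Rightarrow> real" where
  "qf M x = bil M x x"
definition dt :: "real^2 \<Rightarrow> real^2 \<Rightarrow> real" where
  "dt x y = x$1*y$2 - x$2*y$1"

lemma bil_expl: "bil M x y = M$1$1*x$1*y$1 + M$1$2*x$1*y$2 + M$2$1*x$2*y$1 + M$2$2*x$2*y$2"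
  by (simp add: bil_def inner2 mv2 algebra_simps)

lemma Mnorm_qf: "Mnorm M e = sqrt (qf M e)"
  by (simp add: Mnorm_def qf_def bil_def)

lemma bil_sym: "M$1$2 = M$2$1 \<Longrightarrow> bil M x y = bil M y x"
  by (simp add: bil_expl algebra_simps)

lemma qf_lin2: "M$1$2 = M$2$1 \<Longrightarrow>
  qf M (a *\<^sub>R e + b *\<^sub>R f) = a^2 * qf M e + 2*a*b * bil M e f + b^2 * qf M f"
  by (simp add: qf_def bil_expl algebra_simps power2_eq_square)

lemma qf_scale: "qf M (a *\<^sub>R e) = a^2 * qf M e"
  by (simp add: qf_def bil_expl algebra_simps power2_eq_square)

lemma qf_neg: "qf M (- e) = qf M e"
  by (simp add: qf_def bil_expl algebra_simps)

lemma gram: "M$1$2 = M$2$1 \<Longrightarrow> qf M e * qf M f - (bil M e f)^2 = det M * (dt e f)^2"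
  by (simp add: qf_def bil_expl det_2 dt_def algebra_simps power2_eq_square)

lemma Zvec_iff: "v \<in> Zvec \<longleftrightarrow> v$1 \<in> \<int> \<and> v$2 \<in> \<int>"
  by (simp add: Zvec_def forall_2)

lemma Zvec_add: "x \<in> Zvec \<Longrightarrow> y \<in> Zvec \<Longrightarrow> x + y \<in> Zvec"
  by (simp add: Zvec_iff)
lemma Zvec_diff: "x \<in> Zvec \<Longrightarrow> y \<in> Zvec \<Longrightarrow> x - y \<in> Zvec"
  by (simp add: Zvec_iff)
lemma Zvec_uminus: "x \<in> Zvec \<Longrightarrow> - x \<in> Zvec"
  by (simp add: Zvec_iff)
lemma Zvec_zero: "0 \<in> Zvec"
  by (simp add: Zvec_iff)
lemma Zvec_scale: "x \<in> Zvec \<Longrightarrow> of_int k *\<^sub>R x \<in> Zvec"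
  by (simp add: Zvec_iff)

lemma dt_Ints: "x \<in> Zvec \<Longrightarrow> y \<in> Zvec \<Longrightarrow> dt x y \<in> \<int>"
  by (simp add: Zvec_iff dt_def)

lemma Zbasis_sym: "is_Zbasis x y \<Longrightarrow> is_Zbasis y x"
proof -
  assume a: "is_Zbasis x y"
  have "y$1 * x$2 - y$2 * x$1 = - (x$1 * y$2 - x$2 * y$1)" by (simp add: algebra_simps)
  then show ?thesis using a unfolding is_Zbasis_def by (simp only: abs_minus_cancel) 
qed

lemma Zbasis_dt: "is_Zbasis x y \<Longrightarrow> \<bar>dt x y\<bar> = 1"
  unfolding is_Zbasis_def dt_def by simp

lemma Zbasis_nz: "is_Zbasis x y \<Longrightarrow> x \<noteq> 0"
  unfolding is_Zbasis_def by auto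

lemma abs_mult_Ints_1:
  assumes "a \<in> \<int>" "d \<in> \<int>" "\<bar>a * d\<bar> = (1::real)" shows "\<bar>a\<bar> = 1"
proof -
  obtain a' d' where a: "a = of_int a'" and d: "d = of_int d'" using assms(1,2) Ints_cases by metis
  have "\<bar>a' * d'\<bar> = 1" using assms(3) unfolding a d by (metis of_int_1 of_int_abs of_int_eq_iff of_int_mult)
  then have "\<bar>a'\<bar> = 1 \<and> \<bar>d'\<bar> = 1 \<or> \<bar>a'\<bar> = - 1 \<and> \<bar>d'\<bar> = - 1" by (simp add: abs_mult zmult_eq_1_iff)
  then have "\<bar>a'\<bar> = 1" by (smt (verit) abs_ge_zero)
  then show ?thesis unfolding a by (metis of_int_1 of_int_abs)
qed

lemma prim:
  assumes "is_Zbasis x y" "x = of_int a *\<^sub>R w" "w \<in> Zvec"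
  shows "\<bar>a\<bar> = 1"
proof -
  have "dt x y = of_int a * dt w y" using assms(2) by (simp add: dt_def algebra_simps)
  moreover have "dt w y \<in> \<int>" using assms(1,3) dt_Ints is_Zbasis_def by blast
  ultimately have "\<bar>(of_int a::real)\<bar> = 1" using abs_mult_Ints_1 Zbasis_dt[OF assms(1)] by fastforce
  then show ?thesis by linarith
qed

lemma coords:
  assumes "is_Zbasis e f" "v \<in> Zvec"
  shows "\<exists>a b::int. v = of_int a *\<^sub>R e + of_int b *\<^sub>R f"
proof -
  obtain e1 e2 f1 f2 v1 v2 where i: "e$1 = of_int e1" "e$2 = of_int e2" "f$1 = of_int f1" "f$2 = of_int f2"
    "v$1 = of_int v1" "v$2 = of_int v2"
    using assms unfolding is_Zbasis_def Zvec_iff by (metis Ints_cases)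
  define d where "d = e1*f2 - e2*f1"
  have "\<bar>d\<bar> = 1" using Zbasis_dt[OF assms(1)] unfolding dt_def i d_def
    by (metis of_int_1 of_int_abs of_int_diff of_int_eq_iff of_int_mult)
  then have dd: "d*d = 1" by (metis abs_mult_self_eq mult_1_right)
  define a where "a = (v1 * f2 - v2 * f1) * d"
  define b where "b = (e1 * v2 - e2 * v1) * d"
  have "a * e1 + b * f1 = v1 * (d * d)" "a * e2 + b * f2 = v2 * (d * d)"
    unfolding a_def b_def d_def by (simp_all add: algebra_simps)
  then have "v1 = a * e1 + b * f1" "v2 = a * e2 + b * f2" using dd by simp_all
  then have "v = of_int a *\<^sub>R e + of_int b *\<^sub>R f"
    by (simp add: vec2_eq i)
  then show ?thesis by blast
qed

lemma Zvec_norm_ge1: "v \<in> Zvec \<Longrightarrow> v \<noteq> 0 \<Longrightarrow> 1 \<le> (norm v)^2"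
proof -
  assume v: "v \<in> Zvec" "v \<noteq> 0"
  obtain a b where ab: "v$1 = of_int a" "v$2 = of_int b" using v(1) unfolding Zvec_iff by (metis Ints_cases)
  have "a \<noteq> 0 \<or> b \<noteq> 0" using v(2) ab by (auto simp: vec2_eq)
  then have "1 \<le> a^2 + b^2" by (smt (verit) zero_le_power2 power2_less_eq_zero_iff int_one_le_iff_zero_less power2_eq_square mult_pos_pos
          zero_less_power2 )
  then have "1 \<le> (of_int a::real)^2 + (of_int b)^2" by (metis of_int_1 of_int_add of_int_le_iff of_int_power)
  then show ?thesis by (simp add: norm2sq ab)
qed



lemma four_set:
  fixes e f e' f' :: "'a::ab_group_add"
  assumes "e' \<in> {e,-e,f,-f}" "f' \<in> {e,-e,f,-f}" "f' \<noteq> e'" "f' \<noteq> -e'" "f \<noteq> e" "f \<noteq> -e"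
  shows "{e,-e,f,-f} \<subseteq> {e',-e',f',-f'}"
  using assms by (auto simp: minus_equation_iff)
lemma unit_cases: "\<bar>a::int\<bar> = 1 \<Longrightarrow> of_int a *\<^sub>R (x::real^2) = x \<or> of_int a *\<^sub>R x = - x"
proof -
  assume "\<bar>a\<bar> = 1"
  then have "a = 1 \<or> a = -1" by arith
  then show ?thesis by auto
qed

lemma dt_self_scale: "dt x (c *\<^sub>R x) = 0"
  by (simp add: dt_def algebra_simps)

lemma Zbasis_notin:
  assumes "is_Zbasis x y" "x' = of_int c *\<^sub>R x"
  shows "y \<notin> range (\<lambda>k::int. of_int k *\<^sub>R x')"
proof
  assume "y \<in> range (\<lambda>k::int. of_int k *\<^sub>R x')"
  then obtain k where "y = of_int k *\<^sub>R x'" by auto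
  then have "y = (of_int k * of_int c) *\<^sub>R x" using assms(2) by simp
  then have "dt x y = 0" by (simp add: dt_self_scale)
  then show False using Zbasis_dt[OF assms(1)] by simp
qed

lemma int_sq_ge1: "(a::int) \<noteq> 0 \<Longrightarrow> 1 \<le> (of_int a :: real)^2"
proof -
  assume "a \<noteq> 0"
  then have "1 \<le> \<bar>a\<bar>" by arith
  then have h: "1 \<le> \<bar>of_int a :: real\<bar>" by (metis of_int_1_le_iff of_int_abs)
  have "(of_int a :: real)^2 = \<bar>of_int a\<bar> * \<bar>of_int a\<bar>" by (simp add: power2_eq_square abs_mult_self_eq)
  then show ?thesis using mult_mono[OF h h] by simp
qed

definition keyP :: "real^2^2 \<Rightarrow> real^2 \<Rightarrow> real^2 \<Rightarrow> bool" where
  "keyP M e f \<longleftrightarrow> (\<forall>a b::int. a \<noteq> 0 \<longrightarrow> b \<noteq> 0 \<longrightarrow>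
      qf M e < qf M (of_int a *\<^sub>R e + of_int b *\<^sub>R f) \<and> qf M f < qf M (of_int a *\<^sub>R e + of_int b *\<^sub>R f))"

lemma keyP_sym: "keyP M e f \<Longrightarrow> keyP M f e"
  unfolding keyP_def by (metis add.commute)

lemma one_vec:
  assumes Z: "is_Zbasis e f" and K: "keyP M e f" and X: "is_Zbasis x y"
    and nx: "x \<notin> {e, -e, f, -f}"
  shows "qf M e < qf M x \<and> qf M f < qf M x"
proof -
  have "x \<in> Zvec" using X is_Zbasis_def by blast
  then obtain a b where x: "x = of_int a *\<^sub>R e + of_int b *\<^sub>R f" using coords[OF Z] by blast
  have "b \<noteq> 0"
  proof
    assume "b = 0"
    then have xa: "x = of_int a *\<^sub>R e" using x by simp
    moreover have "\<bar>a\<bar> = 1" using prim[OF X xa] Z is_Zbasis_def by blast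
    ultimately show False using nx unit_cases by auto
  qed
  moreover have "a \<noteq> 0"
  proof
    assume "a = 0"
    then have xb: "x = of_int b *\<^sub>R f" using x by simp
    moreover have "\<bar>b\<bar> = 1" using prim[OF X xb] Z is_Zbasis_def by blast
    ultimately show False using nx unit_cases by auto
  qed
  ultimately show ?thesis using K x unfolding keyP_def by blast
qed

lemma red_contains:
  assumes Z: "is_Zbasis e f" and K: "keyP M e f" and R: "reduced_basis M e' f'"
  shows "{e, -e, f, -f} \<subseteq> {e', -e', f', -f'}"
proof -
  have Z': "is_Zbasis e' f'" and m1: "\<forall>v\<in>Zvec - {0}. qf M e' \<le> qf M v"
    and m2: "\<forall>v\<in>Zvec - range (\<lambda>k::int. of_int k *\<^sub>R e'). qf M f' \<le> qf M v"
    using R unfolding reduced_basis_def Mnorm_qf real_sqrt_le_iff by auto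
  have eZ: "e \<in> Zvec" "f \<in> Zvec" "e \<noteq> 0" "f \<noteq> 0"
    using Z Zbasis_sym[OF Z] Zbasis_nz is_Zbasis_def by blast+
  have fZ: "e' \<in> Zvec" "f' \<in> Zvec" using Z' is_Zbasis_def by blast+
  show ?thesis
  proof (cases "e' \<in> {e, -e, f, -f}")
    case False
    have "qf M e < qf M e'" using one_vec[OF Z K Z' False] by blast
    moreover have "qf M e' \<le> qf M e" using m1 eZ by blast
    ultimately show ?thesis by simp
  next
    case eT: True
    show ?thesis
    proof (cases "f' \<in> {e, -e, f, -f}")
      case False
      have "qf M e < qf M f' \<and> qf M f < qf M f'" using one_vec[OF Z K Zbasis_sym[OF Z'] False] .
      moreover have "qf M f' \<le> qf M e \<or> qf M f' \<le> qf M f"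
      proof -
        have "e' = e \<or> e' = -e \<or> e' = f \<or> e' = -f" using eT by auto
        then show ?thesis
        proof (elim disjE)
          assume "e' = e"
          then have "f \<notin> range (\<lambda>k::int. of_int k *\<^sub>R e')" using Zbasis_notin[OF Z, of e' 1] by simp
          then show ?thesis using m2 eZ by blast
        next
          assume "e' = -e"
          then have "f \<notin> range (\<lambda>k::int. of_int k *\<^sub>R e')" using Zbasis_notin[OF Z, of e' "-1"] by simp
          then show ?thesis using m2 eZ by blast
        next
          assume "e' = f"
          then have "e \<notin> range (\<lambda>k::int. of_int k *\<^sub>R e')" using Zbasis_notin[OF Zbasis_sym[OF Z], of e' 1] by simp
          then show ?thesis using m2 eZ by blast
        next
          assume "e' = -f"
          then have "e \<notin> range (\<lambda>k::int. of_int k *\<^sub>R e')" using Zbasis_notin[OF Zbasis_sym[OF Z], of e' "-1"] by simp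
          then show ?thesis using m2 eZ by blast
        qed
      qed
      ultimately show ?thesis by linarith
    next
      case fT: True
      have r1: "f' \<notin> range (\<lambda>k::int. of_int k *\<^sub>R e')" using Zbasis_notin[OF Z', of e' 1] by simp
      have n1: "f' \<noteq> e'"
      proof
        assume "f' = e'"
        then have "f' = (\<lambda>k::int. of_int k *\<^sub>R e') 1" by simp
        then show False using r1 rangeI by metis
      qed
      have n2: "f' \<noteq> -e'"
      proof
        assume "f' = -e'"
        then have "f' = (\<lambda>k::int. of_int k *\<^sub>R e') (-1)" by simp
        then show False using r1 rangeI by metis
      qed
      have r2: "f \<notin> range (\<lambda>k::int. of_int k *\<^sub>R e)" using Zbasis_notin[OF Z, of e 1] by simp
      have n3: "f \<noteq> e"
      proof
        assume "f = e"
        then have "f = (\<lambda>k::int. of_int k *\<^sub>R e) 1" by simp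
        then show False using r2 rangeI by metis
      qed
      have n4: "f \<noteq> -e"
      proof
        assume "f = -e"
        then have "f = (\<lambda>k::int. of_int k *\<^sub>R e) (-1)" by simp
        then show False using r2 rangeI by metis
      qed
      show ?thesis by (rule four_set[OF eT fT n1 n2 n3 n4])
    qed
  qed
qed

lemma sb_contains1:
  assumes Z: "is_Zbasis e f" and K: "keyP M e f" and sym: "M$1$2 = M$2$1"
    and SB: "obtuse_superbase M e0 e1 e2"
  shows "e \<in> {e0, -e0, e1, -e1, e2, -e2}"
proof (rule ccontr)
  assume ne: "e \<notin> {e0, -e0, e1, -e1, e2, -e2}"
  have e0: "e0 = - e1 - e2" and Zb: "is_Zbasis e1 e2"
    and o1: "bil M e0 e1 \<le> 0" and o2: "bil M e1 e2 \<le> 0" and o3: "bil M e0 e2 \<le> 0"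
    using SB unfolding obtuse_superbase_def bil_def by (auto simp: algebra_simps eq_neg_iff_add_eq_0)
  have Z1: "e1 \<in> Zvec" "e2 \<in> Zvec" using Zb is_Zbasis_def by auto
  have Z0: "e0 \<in> Zvec" using e0 Z1 Zvec_diff Zvec_uminus by simp
  have Zb0: "is_Zbasis e0 e1"
  proof -
    have "dt e0 e1 = dt e1 e2" unfolding e0 dt_def by (simp add: algebra_simps)
    then show ?thesis using Zb Z0 Z1 unfolding is_Zbasis_def dt_def by simp
  qed
  have eZ: "e \<in> Zvec" using Z is_Zbasis_def by blast
  obtain a1 a2 where ea: "e = of_int a1 *\<^sub>R e1 + of_int a2 *\<^sub>R e2" using coords[OF Zb eZ] by blast
  have a2: "a2 \<noteq> 0"
  proof
    assume "a2 = 0"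
    then have h: "e = of_int a1 *\<^sub>R e1" using ea by simp
    moreover have "\<bar>a1\<bar> = 1" using prim[OF Z h Z1(1)] .
    ultimately show False using ne unit_cases by auto
  qed
  have a1: "a1 \<noteq> 0"
  proof
    assume "a1 = 0"
    then have h: "e = of_int a2 *\<^sub>R e2" using ea by simp
    moreover have "\<bar>a2\<bar> = 1" using prim[OF Z h Z1(2)] .
    ultimately show False using ne unit_cases by auto
  qed
  have a12: "a1 \<noteq> a2"
  proof
    assume "a1 = a2"
    then have h: "e = of_int (- a1) *\<^sub>R e0" unfolding e0 using ea by (simp add: algebra_simps)
    moreover have ab: "\<bar>- a1\<bar> = 1" using prim[OF Z h Z0] .
    ultimately have "e = e0 \<or> e = - e0" using unit_cases[OF ab, of e0] by metis
    then show False using ne by auto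
  qed
  define Q1 where "Q1 = qf M e1"
  define Q2 where "Q2 = qf M e2"
  define B where "B = bil M e1 e2"
  have qe: "qf M e = (of_int a1)^2 * Q1 + 2 * of_int a1 * of_int a2 * B + (of_int a2)^2 * Q2"
    using qf_lin2[OF sym] ea unfolding Q1_def Q2_def B_def by simp
  have q0: "qf M e0 = Q1 + 2 * B + Q2"
  proof -
    have "e0 = (-1) *\<^sub>R e1 + (-1) *\<^sub>R e2" using e0 by simp
    then have "qf M e0 = (-1)^2 * qf M e1 + 2 * (-1) * (-1) * bil M e1 e2 + (-1)^2 * qf M e2"
      using qf_lin2[OF sym, of "-1" e1 "-1" e2] by simp
    then show ?thesis unfolding Q1_def Q2_def B_def by simp
  qed
  have P: "0 \<le> Q1 + B" using o1 e0 sym unfolding Q1_def B_def qf_def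
    by (simp add: bil_expl algebra_simps)
  have R: "0 \<le> Q2 + B" using o3 e0 sym unfolding Q2_def B_def qf_def
    by (simp add: bil_expl algebra_simps)
  have S: "B \<le> 0" using o2 B_def by simp
  define x where "x = (of_int a1 :: real)"
  define y where "y = (of_int a2 :: real)"
  have x1: "1 \<le> x^2" using a1 unfolding x_def by (rule int_sq_ge1)
  have y1: "1 \<le> y^2" using a2 unfolding y_def by (rule int_sq_ge1)
  have xy1: "1 \<le> (x - y)^2" using a12 unfolding x_def y_def
    using int_sq_ge1[of "a1 - a2"] by simp
  have qe': "qf M e = x^2 * Q1 + 2 * x * y * B + y^2 * Q2" using qe x_def y_def by simp
  have i1: "qf M e - Q1 = (x^2 - 1) * (Q1 + B) + y^2 * (Q2 + B) + ((x - y)^2 - 1) * (- B)"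
    unfolding qe' by (simp add: algebra_simps power2_eq_square)
  have i2: "qf M e - Q2 = x^2 * (Q1 + B) + (y^2 - 1) * (Q2 + B) + ((x - y)^2 - 1) * (- B)"
    unfolding qe' by (simp add: algebra_simps power2_eq_square)
  have i0: "qf M e - qf M e0 = (x^2 - 1) * (Q1 + B) + (y^2 - 1) * (Q2 + B) + (x - y)^2 * (- B)"
    unfolding qe' q0 by (simp add: algebra_simps power2_eq_square)
  have p1: "0 \<le> (x^2 - 1) * (Q1 + B)" using x1 P by simp
  have p2: "0 \<le> y^2 * (Q2 + B)" using R by simp
  have p3: "0 \<le> ((x - y)^2 - 1) * (- B)" using xy1 S by (intro mult_nonneg_nonneg) simp_all
  have p4: "0 \<le> x^2 * (Q1 + B)" using P by simp
  have p5: "0 \<le> (y^2 - 1) * (Q2 + B)" using y1 R by simp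
  have p6: "0 \<le> (x - y)^2 * (- B)" using S by (intro mult_nonneg_nonneg) simp_all
  have g1: "Q1 \<le> qf M e" using i1 p1 p2 p3 by linarith
  have g2: "Q2 \<le> qf M e" using i2 p4 p5 p3 by linarith
  have g0: "qf M e0 \<le> qf M e" using i0 p1 p5 p6 by linarith
  have m1: "e1 \<in> {e, -e, f, -f}"
  proof (rule ccontr)
    assume "e1 \<notin> {e, -e, f, -f}"
    then show False using one_vec[OF Z K Zb] g1 Q1_def by simp
  qed
  have m2: "e2 \<in> {e, -e, f, -f}"
  proof (rule ccontr)
    assume "e2 \<notin> {e, -e, f, -f}"
    then show False using one_vec[OF Z K Zbasis_sym[OF Zb]] g2 Q2_def by simp
  qed
  have "e1 \<noteq> e \<and> e1 \<noteq> -e \<and> e2 \<noteq> e \<and> e2 \<noteq> -e" using ne by auto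
  then have "e1 \<in> {f, -f}" "e2 \<in> {f, -f}" using m1 m2 by auto
  then have "e2 = 1 *\<^sub>R e1 \<or> e2 = (-1) *\<^sub>R e1" by auto
  then have "dt e1 e2 = 0" using dt_self_scale by metis
  then show False using Zbasis_dt[OF Zb] by simp
qed

lemma sb_contains:
  assumes Z: "is_Zbasis e f" and K: "keyP M e f" and sym: "M$1$2 = M$2$1"
    and SB: "obtuse_superbase M e0 e1 e2"
  shows "{e, -e, f, -f} \<subseteq> {e0, -e0, e1, -e1, e2, -e2}"
proof -
  have "e \<in> {e0, -e0, e1, -e1, e2, -e2}" using sb_contains1[OF Z K sym SB] .
  moreover have "f \<in> {e0, -e0, e1, -e1, e2, -e2}" using sb_contains1[OF Zbasis_sym[OF Z] keyP_sym[OF K] sym SB] .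
  ultimately show ?thesis by auto
qed



lemma finite_Zball: "finite {v \<in> Zvec. (norm v)^2 \<le> R}"
proof -
  define N where "N = \<lceil>sqrt \<bar>R\<bar>\<rceil>"
  have "{v \<in> Zvec. (norm v)^2 \<le> R} \<subseteq> (\<lambda>(i,j). vector [of_int i, of_int j] :: real^2) ` ({-N..N} \<times> {-N..N})"
  proof
    fix v assume v: "v \<in> {v \<in> Zvec. (norm v)^2 \<le> R}"
    obtain i j where ij: "v$1 = of_int i" "v$2 = of_int j" using v unfolding Zvec_iff by (auto elim!: Ints_cases)
    have nv: "norm v \<le> sqrt \<bar>R\<bar>" using v by (metis (mono_tags, lifting) abs_ge_self mem_Collect_eq norm_ge_zero real_sqrt_abs real_sqrt_le_mono order_trans)
    have "\<bar>v$1\<bar> \<le> norm v" "\<bar>v$2\<bar> \<le> norm v" by (simp_all add: component_le_norm_cart)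
    then have "\<bar>of_int i :: real\<bar> \<le> of_int N" "\<bar>of_int j :: real\<bar> \<le> of_int N"
      using nv ij unfolding N_def by (smt (verit) le_of_int_ceiling)+
    then have "i \<in> {-N..N}" "j \<in> {-N..N}" by (simp_all add: abs_le_iff)
    moreover have "v = vector [of_int i, of_int j]" using ij by (simp add: vec2_eq)
    ultimately show "v \<in> (\<lambda>(i,j). vector [of_int i, of_int j] :: real^2) ` ({-N..N} \<times> {-N..N})" by force
  qed
  then show ?thesis by (rule finite_subset) simp
qed

lemma lat_min:
  assumes c: "0 < c" and pd: "\<forall>x. c * (norm x)^2 \<le> qf M x"
    and T: "T \<subseteq> Zvec" and v0: "v0 \<in> T"
  shows "\<exists>e\<in>T. \<forall>v\<in>T. qf M e \<le> qf M v"
proof -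
  define S where "S = {v \<in> T. qf M v \<le> qf M v0}"
  have "S \<subseteq> {v \<in> Zvec. (norm v)^2 \<le> qf M v0 / c}"
  proof
    fix v assume "v \<in> S"
    then have "v \<in> Zvec" "c * (norm v)^2 \<le> qf M v0" using S_def T pd by (auto intro: order_trans)
    then show "v \<in> {v \<in> Zvec. (norm v)^2 \<le> qf M v0 / c}" using c by (simp add: field_simps)
  qed
  then have fS: "finite S" using finite_Zball finite_subset by blast
  have neS: "S \<noteq> {}" using v0 S_def by auto
  define m where "m = Min (qf M ` S)"
  have "m \<in> qf M ` S" unfolding m_def using fS neS by simp
  then obtain e where e: "e \<in> S" "qf M e = m" by auto
  have "\<forall>v\<in>T. qf M e \<le> qf M v"
  proof
    fix v assume v: "v \<in> T"
    show "qf M e \<le> qf M v"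
    proof (cases "qf M v \<le> qf M v0")
      case True
      then have "v \<in> S" using v S_def by simp
      then show ?thesis using e fS unfolding m_def by simp
    next
      case False
      moreover have "qf M e \<le> qf M v0" using e S_def by simp
      ultimately show ?thesis by simp
    qed
  qed
  then show ?thesis using e S_def by auto
qed

lemma qf_pos:
  assumes c: "0 < c" and pd: "\<forall>x. c * (norm x)^2 \<le> qf M x" and "x \<noteq> 0"
  shows "0 < qf M x"
proof -
  have "0 < c * (norm x)^2" using c assms(3) by simp
  then show ?thesis using pd by (meson order_less_le_trans)
qed

lemma exists_reduced:
  assumes sym: "M$1$2 = M$2$1" and c: "0 < c" and pd: "\<forall>x. c * (norm x)^2 \<le> qf M x"
  shows "\<exists>e f. reduced_basis M e f"
proof -
  define v1 where "v1 = (vector [1, 0] :: real^2)"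
  have v1: "v1 \<in> Zvec - {0}" unfolding v1_def by (simp add: Zvec_iff vec2_eq)
  obtain e where e: "e \<in> Zvec - {0}" and emin: "\<forall>v\<in>Zvec - {0}. qf M e \<le> qf M v"
    using lat_min[OF c pd _ v1] by blast
  have "e$1 \<in> \<int>" "e$2 \<in> \<int>" using e Zvec_iff by auto
  then obtain p q where pq: "e$1 = of_int p" "e$2 = of_int q" by (metis Ints_cases)
  have pq0: "p \<noteq> 0 \<or> q \<noteq> 0" using e pq by (auto simp: vec2_eq)
  define g where "g = gcd p q"
  have gpos: "0 < g" using pq0 g_def by simp
  define e' where "e' = (vector [of_int (p div g), of_int (q div g)] :: real^2)"
  have pg: "p = g * (p div g)" "q = g * (q div g)" unfolding g_def by simp_all
  have ee': "e = of_int g *\<^sub>R e'"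
    unfolding e'_def using pq pg by (simp add: vec2_eq) (metis of_int_mult)
  have e'Z: "e' \<in> Zvec - {0}" using ee' e unfolding e'_def by (auto simp: Zvec_iff)
  have "qf M e \<le> qf M e'" using emin e'Z by blast
  then have le: "(of_int g)^2 * qf M e' \<le> qf M e'" using ee' qf_scale by simp
  have "0 < qf M e'" using qf_pos[OF c pd] e'Z by auto
  then have "(of_int g :: real)^2 \<le> 1" using le by (simp add: mult_le_cancel_right1)
  have g1: "g = 1"
  proof (rule ccontr)
    assume "g \<noteq> 1"
    then have "2 \<le> g" using gpos by simp
    then have "(2::real) \<le> of_int g" by simp
    then have "(2::real)^2 \<le> (of_int g)^2" by (rule power_mono) simp
    then show False using \<open>(of_int g :: real)^2 \<le> 1\<close> by simp
  qed
  obtain s t where st: "s * p + t * q = gcd p q" using bezout_int by blast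
  define g0 where "g0 = (vector [- of_int t, of_int s] :: real^2)"
  have dtg0: "dt e g0 = 1"
  proof -
    have "dt e g0 = of_int (s * p + t * q)" unfolding dt_def g0_def using pq by (simp add: algebra_simps)
    then show ?thesis using st g1 g_def by simp
  qed
  have eZ: "e \<in> Zvec" using e by simp
  have g0Z: "g0 \<in> Zvec" unfolding g0_def by (simp add: Zvec_iff)
  have Zb0: "is_Zbasis e g0" using dtg0 eZ g0Z unfolding is_Zbasis_def dt_def by simp
  define T2 where "T2 = Zvec - range (\<lambda>k::int. of_int k *\<^sub>R e)"
  have g0T: "g0 \<in> T2" unfolding T2_def using Zbasis_notin[OF Zb0, of e 1] g0Z by simp
  obtain f where f: "f \<in> T2" and fmin: "\<forall>v\<in>T2. qf M f \<le> qf M v"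
    using lat_min[OF c pd _ g0T] T2_def by blast
  have fZ: "f \<in> Zvec" using f T2_def by simp
  obtain \<alpha> \<beta> where fab: "f = of_int \<alpha> *\<^sub>R e + of_int \<beta> *\<^sub>R g0" using coords[OF Zb0 fZ] by blast
  have b0: "\<beta> \<noteq> 0"
  proof
    assume "\<beta> = 0"
    then have "f = of_int \<alpha> *\<^sub>R e" using fab by simp
    then show False using f T2_def by auto
  qed
  define E where "E = qf M e"
  have Epos: "0 < E" using qf_pos[OF c pd] e E_def by auto
  define bb where "bb = bil M e g0"
  define k where "k = - \<lfloor>bb / E + 1/2\<rfloor>"
  define g' where "g' = g0 + of_int k *\<^sub>R e"
  define B where "B = bil M e g'"
  define G where "G = qf M g'"
  have Bk: "B = bb + of_int k * E" unfolding B_def bb_def E_def g'_def qf_def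
    by (simp add: bil_expl algebra_simps)
  have fl1: "of_int \<lfloor>bb / E + 1/2\<rfloor> \<le> bb / E + 1/2" by (rule of_int_floor_le)
  have fl2: "bb / E + 1/2 < of_int \<lfloor>bb / E + 1/2\<rfloor> + 1" by (rule real_of_int_floor_add_one_gt)
  have "-1/2 \<le> bb / E + of_int k" "bb / E + of_int k \<le> 1/2" using fl1 fl2 by (simp_all only: k_def of_int_minus)
  then have "-E/2 \<le> bb + of_int k * E" "bb + of_int k * E \<le> E/2" using Epos
    by (simp_all add: field_simps)
  then have "\<bar>B\<bar> \<le> E/2" unfolding Bk abs_le_iff by linarith
  then have "\<bar>B\<bar>^2 \<le> (E/2)^2" by (rule power_mono) simp
  then have Bb: "B^2 \<le> E^2 / 4" by (simp add: power_divide)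
  have dtg': "dt e g' = 1" using dtg0 unfolding g'_def dt_def by (simp add: algebra_simps)
  have g'Z: "g' \<in> Zvec" unfolding g'_def using g0Z eZ by (simp add: Zvec_add Zvec_scale)
  have Zb': "is_Zbasis e g'" using dtg' eZ g'Z unfolding is_Zbasis_def dt_def by simp
  have g'T: "g' \<in> T2" unfolding T2_def using Zbasis_notin[OF Zb', of e 1] g'Z by simp
  have fG: "qf M f \<le> G" using fmin g'T G_def by simp
  have g'nz: "g' \<noteq> 0" using Zbasis_nz[OF Zbasis_sym[OF Zb']] .
  have EG: "E \<le> G" using emin g'Z g'nz E_def G_def by simp
  have fab': "f = of_int (\<alpha> - k * \<beta>) *\<^sub>R e + of_int \<beta> *\<^sub>R g'"
    unfolding fab g'_def by (simp add: algebra_simps)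
  have ident: "E * qf M f = (of_int (\<alpha> - k * \<beta>) * E + of_int \<beta> * B)^2 + (of_int \<beta>)^2 * (E * G - B^2)"
    unfolding fab' qf_lin2[OF sym] E_def B_def G_def by (simp add: algebra_simps power2_eq_square)
  have babs: "\<bar>\<beta>\<bar> = 1"
  proof (rule ccontr)
    assume "\<bar>\<beta>\<bar> \<noteq> 1"
    then have "2 \<le> \<bar>\<beta>\<bar>" using b0 by simp
    then have "(2::real) \<le> \<bar>of_int \<beta>\<bar>" by (metis of_int_abs of_int_le_iff of_int_numeral)
    then have "(2::real)^2 \<le> \<bar>of_int \<beta>\<bar>^2" by (rule power_mono) simp
    then have b4: "4 \<le> (of_int \<beta> :: real)^2" by simp
    have EE: "E * E \<le> E * G" using EG Epos by simp
    have E2: "E^2 = E * E" by (simp add: power2_eq_square)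
    have EEp: "0 < E * E" using Epos by simp
    have "0 \<le> E * G - B^2" using Bb EE E2 EEp by linarith
    have "4 * (E * G - B^2) \<le> (of_int \<beta>)^2 * (E * G - B^2)"
      using b4 \<open>0 \<le> E * G - B^2\<close> by (rule mult_right_mono)
    moreover have "0 \<le> (of_int (\<alpha> - k * \<beta>) * E + of_int \<beta> * B)^2" by simp
    ultimately have "4 * (E * G - B^2) \<le> E * qf M f" using ident by linarith
    moreover have "4 * (E * G - B^2) = 4 * (E * G) - 4 * B^2" by (simp add: algebra_simps)
    ultimately have "4 * (E * G) - E^2 \<le> E * qf M f" using Bb by linarith
    moreover have "E * qf M f \<le> E * G" using fG Epos by simp
    ultimately show False using EE E2 EEp by linarith
  qed
  have "dt e f = of_int \<beta>" unfolding fab using dtg0 by (simp add: dt_def algebra_simps)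
  then have "\<bar>dt e f\<bar> = 1" using babs by (metis of_int_1 of_int_abs)
  then have Zbf: "is_Zbasis e f" using eZ fZ unfolding is_Zbasis_def dt_def by simp
  have "reduced_basis M e f"
    unfolding reduced_basis_def Mnorm_qf real_sqrt_le_iff using Zbf emin fmin T2_def by blast
  then show ?thesis by blast
qed



lemma S2_facts:
  assumes "A \<in> S2plus"
  shows "A$1$2 = A$2$1" "0 < A$1$1" "0 < A$1$1*A$2$2 - A$1$2*A$2$1"
    "\<forall>x. 0 \<le> x \<bullet> (A *v x)"
proof -
  have tr: "transpose A = A" and pd: "\<forall>x::real^2. x \<noteq> 0 \<longrightarrow> 0 < x \<bullet> (A *v x)"
    using assms unfolding S2plus_def by auto
  have "(transpose A)$1$2 = A$2$1" by (simp add: transpose_def)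
  then show s: "A$1$2 = A$2$1" using tr by simp
  have "0 < (vector [1,0] :: real^2) \<bullet> (A *v vector [1,0])" using pd by (simp add: vec2_eq)
  then show a: "0 < A$1$1" by (simp add: inner2 mv2)
  have "(vector [- A$1$2, A$1$1] :: real^2) \<noteq> 0" using a by (simp add: vec2_eq)
  then have "0 < (vector [- A$1$2, A$1$1] :: real^2) \<bullet> (A *v vector [- A$1$2, A$1$1])" using pd by blast
  then have "0 < A$1$1 * (A$1$1*A$2$2 - A$1$2*A$2$1)" using s by (simp add: inner2 mv2 algebra_simps)
  then show "0 < A$1$1*A$2$2 - A$1$2*A$2$1" using a by (simp add: zero_less_mult_iff)
  show "\<forall>x. 0 \<le> x \<bullet> (A *v x)"
  proof
    fix x :: "real^2" show "0 \<le> x \<bullet> (A *v x)" using pd by (cases "x = 0") (auto intro: less_imp_le)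
  qed
qed

lemma onorm_quad:
  fixes A :: "real^2^2"
  shows "x \<bullet> (A *v x) \<le> onorm ((*v) A) * (norm x)^2"
proof -
  have "x \<bullet> (A *v x) \<le> norm x * norm (A *v x)" by (rule norm_cauchy_schwarz)
  also have "\<dots> \<le> norm x * (onorm ((*v) A) * norm x)"
    by (rule mult_left_mono) (simp_all add: onorm matrix_vector_mul_bounded_linear)
  finally show ?thesis by (simp add: power2_eq_square algebra_simps)
qed

lemma Mof_props:
  assumes S: "D z \<in> S2plus"
  shows "(Mof D z)$1$2 = (Mof D z)$2$1" "det (Mof D z) = 1"
    "\<forall>x. qf (Mof D z) x \<le> cond_num (D z) * (norm x)^2"
    "\<forall>x. (norm x)^2 \<le> cond_num (D z) * qf (Mof D z) x"
    "1 \<le> cond_num (D z)"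
proof -
  define A where "A = D z"
  define a where "a = A$1$1"
  define b where "b = A$1$2"
  define c where "c = A$2$2"
  have SA: "A \<in> S2plus" using S A_def by simp
  have sy: "A$2$1 = b" using S2_facts(1)[OF SA] unfolding b_def by simp
  have apos: "0 < a" using S2_facts(2)[OF SA] a_def by simp
  define dl where "dl = a*c - b*b"
  have dlpos: "0 < dl" using S2_facts(3)[OF SA] sy unfolding dl_def a_def b_def c_def by simp
  have psd: "\<forall>x. 0 \<le> x \<bullet> (A *v x)" using S2_facts(4)[OF SA] .
  define sq where "sq = sqrt dl"
  have sqpos: "0 < sq" using dlpos sq_def by simp
  have sqsq: "sq * sq = dl" using dlpos sq_def by simp
  define I where "I = matrix_inv A"
  have Iexp: "I = vector[vector[c/dl, -b/dl], vector[-b/dl, a/dl]]"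
  proof -
    have h: "A$1$1 = a" "A$1$2 = b" "A$2$2 = c" using a_def b_def c_def by simp_all
    have "A$1$1*A$2$2 - A$1$2*A$2$1 = dl" unfolding h sy dl_def by simp
    then show ?thesis using minv2[of A] dlpos unfolding I_def h sy by simp
  qed
  have detA: "det A = dl" unfolding det_2 dl_def sy by (simp add: a_def b_def c_def)
  define M where "M = Mof D z"
  have Mdef: "M = sq *\<^sub>R I" unfolding M_def Mof_def sq_def I_def A_def[symmetric] detA by simp
  have m11: "M$1$1 = c/sq" and m12: "M$1$2 = -b/sq" and m21: "M$2$1 = -b/sq" and m22: "M$2$2 = a/sq"
    unfolding Mdef Iexp using sqsq sqpos dlpos by (simp_all add: field_simps)
  show "(Mof D z)$1$2 = (Mof D z)$2$1" using m12 m21 M_def by simp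
  show "det (Mof D z) = 1" unfolding M_def[symmetric] det_2 m11 m12 m21 m22
    using sqsq sqpos by (simp add: field_simps dl_def)
  define onA where "onA = onorm ((*v) A)"
  define onI where "onI = onorm ((*v) I)"
  have onAp: "0 \<le> onA" unfolding onA_def by (simp add: onorm_pos_le matrix_vector_mul_bounded_linear)
  have onIp: "0 \<le> onI" unfolding onI_def by (simp add: onorm_pos_le matrix_vector_mul_bounded_linear)
  define K where "K = sqrt (onA * onI)"
  have KK: "K * K = onA * onI" "0 \<le> K" using onAp onIp K_def by simp_all
  have cnK: "cond_num (D z) = K" unfolding cond_num_def K_def onA_def onI_def I_def A_def by simp
  have r: "(K * nx)^2 = (onA * nx) * (onI * nx)" for nx
  proof -
    have "(K * nx)^2 = (K * K) * (nx * nx)" by (simp add: power2_eq_square algebra_simps)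
    also have "\<dots> = (onA * onI) * (nx * nx)" using KK by simp
    also have "\<dots> = (onA * nx) * (onI * nx)" by (simp add: algebra_simps)
    finally show ?thesis .
  qed
  have key: "qf M x \<le> K * (norm x)^2 \<and> (norm x)^2 \<le> K * qf M x \<and> (x = vector[1,0] \<longrightarrow> 1 \<le> K)" for x
  proof -
    define x1 where "x1 = x$1"
    define x2 where "x2 = x$2"
    define nx where "nx = (norm x)^2"
    have nx: "nx = x1^2 + x2^2" unfolding nx_def x1_def x2_def by (simp add: norm2sq)
    define y where "y = (vector [- x2, x1] :: real^2)"
    have ny: "(norm y)^2 = nx" unfolding nx y_def by (simp add: norm2sq)
    define N where "N = c*x1^2 - 2*b*x1*x2 + a*x2^2"
    define P where "P = a*x1^2 + 2*b*x1*x2 + c*x2^2"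
    have qfN: "qf M x = N / sq" unfolding qf_def bil_expl m11 m12 m21 m22 N_def x1_def x2_def
      using sqpos by (simp add: field_simps power2_eq_square)
    have e2: "x \<bullet> (I *v x) = N / dl" unfolding Iexp inner2 mv2 N_def x1_def x2_def
      using dlpos by (simp add: field_simps power2_eq_square)
    have e3: "y \<bullet> (A *v y) = N" unfolding inner2 mv2 N_def y_def using sy
      by (simp add: a_def[symmetric] c_def[symmetric] b_def[symmetric] algebra_simps power2_eq_square)
    have e4: "x \<bullet> (A *v x) = P" unfolding inner2 mv2 P_def x1_def x2_def using sy
      by (simp add: a_def[symmetric] c_def[symmetric] b_def[symmetric] algebra_simps power2_eq_square)
    have e5: "y \<bullet> (I *v y) = P / dl" unfolding Iexp inner2 mv2 P_def y_def
      using dlpos by (simp add: field_simps power2_eq_square)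
    have e6: "N * P - dl * nx^2 = (b*(x1^2 - x2^2) + (c - a)*x1*x2)^2"
      unfolding N_def P_def dl_def nx by (simp add: algebra_simps power2_eq_square)
    have b2: "N / dl \<le> onI * nx" using onorm_quad[of x I] e2 onI_def nx_def by simp
    have b3: "N \<le> onA * nx" using onorm_quad[of y A] e3 onA_def ny by simp
    have b4: "P \<le> onA * nx" using onorm_quad[of x A] e4 onA_def nx_def by simp
    have b5: "P / dl \<le> onI * nx" using onorm_quad[of y I] e5 onI_def ny by simp
    have N0: "0 \<le> N" using psd e3 by metis
    have P0: "0 \<le> P" using psd e4 by metis
    have nx0: "0 \<le> nx" unfolding nx_def by simp
    have "N * (N / dl) \<le> (onA * nx) * (onI * nx)"
      using b3 b2 N0 dlpos by (intro mult_mono) simp_all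
    moreover have "(qf M x)^2 = N * (N / dl)" unfolding qfN using sqsq
      by (simp add: power2_eq_square field_simps)
    ultimately have "(qf M x)^2 \<le> (K * nx)^2" using r[of nx] by linarith
    moreover have "0 \<le> K * nx" using KK nx0 by simp
    ultimately have q1: "qf M x \<le> K * nx" by (rule power2_le_imp_le)
    define Pq where "Pq = P / sq"
    have "P * (P / dl) \<le> (onA * nx) * (onI * nx)"
      using b4 b5 P0 dlpos by (intro mult_mono) simp_all
    moreover have "Pq^2 = P * (P / dl)" unfolding Pq_def using sqsq
      by (simp add: power2_eq_square field_simps)
    ultimately have "Pq^2 \<le> (K * nx)^2" using r[of nx] by linarith
    moreover have "0 \<le> K * nx" using KK nx0 by simp
    ultimately have q2: "Pq \<le> K * nx" by (rule power2_le_imp_le)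
    have "qf M x * Pq = N * P / dl" unfolding qfN Pq_def using sqsq by (simp add: field_simps)
    moreover have "dl * nx^2 \<le> N * P" using e6 by (smt (verit) zero_le_power2)
    moreover have "dl * nx^2 \<le> N * P \<Longrightarrow> nx^2 \<le> N * P / dl" using dlpos by (simp add: pos_le_divide_eq mult.commute)
    ultimately have q3: "nx^2 \<le> qf M x * Pq" by simp
    have q0: "0 \<le> qf M x" unfolding qfN using N0 sqpos by simp
    have "qf M x * Pq \<le> qf M x * (K * nx)" using q2 q0 by (rule mult_left_mono)
    then have q4: "nx * nx \<le> (K * qf M x) * nx" using q3 by (simp add: power2_eq_square algebra_simps)
    have q5: "nx \<le> K * qf M x"
    proof (cases "nx = 0")
      case True then show ?thesis using KK q0 by simp
    next
      case False then have "0 < nx" using nx0 by simp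
      then show ?thesis using q4 by simp
    qed
    have q6: "x = vector[1,0] \<longrightarrow> 1 \<le> K"
    proof
      assume "x = vector[1,0]"
      then have n1: "nx = 1" unfolding nx x1_def x2_def by simp
      then have "1 \<le> K * qf M x" "qf M x \<le> K" using q5 q1 by simp_all
      then have "1 \<le> K * K" using KK by (smt (verit) mult_left_mono)
      show "1 \<le> K"
      proof (rule ccontr)
        assume "\<not> 1 \<le> K"
        then have "K * K \<le> 1 * K" using KK by (intro mult_right_mono) simp_all
        then have "K * K < 1" using \<open>\<not> 1 \<le> K\<close> by simp
        then show False using \<open>1 \<le> K * K\<close> by simp
      qed
    qed
    show ?thesis using q1 q5 q6 nx_def by simp
  qed
  show "\<forall>x. qf (Mof D z) x \<le> cond_num (D z) * (norm x)^2" using key cnK M_def by simp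
  show "\<forall>x. (norm x)^2 \<le> cond_num (D z) * qf (Mof D z) x" using key cnK M_def by simp
  show "1 \<le> cond_num (D z)" using key[of "vector[1,0]"] cnK by simp
qed



lemma norm_mv_le: "norm ((A::real^2^2) *v x) \<le> (\<bar>A$1$1\<bar> + \<bar>A$1$2\<bar> + \<bar>A$2$1\<bar> + \<bar>A$2$2\<bar>) * norm x"
proof -
  have c1: "\<bar>x$1\<bar> \<le> norm x" "\<bar>x$2\<bar> \<le> norm x" by (simp_all add: component_le_norm_cart)
  have "norm (A *v x) \<le> \<bar>(A *v x)$1\<bar> + \<bar>(A *v x)$2\<bar>" using norm_le_l1_cart[of "A *v x"] by (simp add: sum_2)
  also have "\<dots> \<le> (\<bar>A$1$1\<bar> * \<bar>x$1\<bar> + \<bar>A$1$2\<bar> * \<bar>x$2\<bar>) + (\<bar>A$2$1\<bar> * \<bar>x$1\<bar> + \<bar>A$2$2\<bar> * \<bar>x$2\<bar>)"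
    unfolding mv2 by (intro add_mono) (simp_all add: abs_triangle_ineq[THEN order_trans] abs_mult
        order_trans[OF abs_triangle_ineq])
  also have "\<dots> \<le> (\<bar>A$1$1\<bar> * norm x + \<bar>A$1$2\<bar> * norm x) + (\<bar>A$2$1\<bar> * norm x + \<bar>A$2$2\<bar> * norm x)"
    using c1 by (intro add_mono mult_left_mono) simp_all
  finally show ?thesis by (simp add: algebra_simps)
qed

lemma per_red:
  assumes D_per: "\<forall>z v. v \<in> Zvec \<longrightarrow> D (z + v) = D z"
  shows "\<exists>z' \<in> cbox 0 1. D z = D z'"
proof -
  define fl where "fl = ((\<chi> i. of_int \<lfloor>z$i\<rfloor>) :: real^2)"
  have flZ: "fl \<in> Zvec" unfolding fl_def Zvec_def by simp
  define z' where "z' = z - fl"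
  have "\<forall>i. 0 \<le> z'$i \<and> z'$i \<le> 1"
  proof
    fix i
    have "of_int \<lfloor>z$i\<rfloor> \<le> z$i" "z$i < of_int \<lfloor>z$i\<rfloor> + 1"
      by (rule of_int_floor_le, rule real_of_int_floor_add_one_gt)
    then show "0 \<le> z'$i \<and> z'$i \<le> 1" unfolding z'_def fl_def by simp linarith
  qed
  then have "z' \<in> cbox 0 1" unfolding mem_box_cart by simp
  moreover have "D z = D z'" using D_per flZ unfolding z'_def by (metis diff_add_cancel)
  ultimately show ?thesis by blast
qed

lemma unif_bounds:
  assumes D_cont: "continuous_on UNIV D"
    and D_spd: "\<forall>z. D z \<in> S2plus"
    and D_per: "\<forall>z v. v \<in> Zvec \<longrightarrow> D (z + v) = D z"
  shows "\<exists>K. \<forall>z. cond_num (D z) \<le> K"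
proof -
  have cc: "continuous_on (cbox 0 1) D" using D_cont continuous_on_subset by blast
  have ne: "cbox (0::real^2) 1 \<noteq> {}" using mem_box_cart(2)[of 0 0 1] by auto
  obtain zb where "zb \<in> cbox (0::real^2) 1" and zb: "\<forall>y\<in>cbox 0 1. norm (D y) \<le> norm (D zb)"
    using continuous_attains_sup[OF compact_cbox ne continuous_on_norm[OF cc]] by blast
  define R where "R = norm (D zb)"
  have nR: "norm (D z) \<le> R" for z using per_red[OF D_per, of z] zb R_def by metis
  have eR: "\<bar>D z $ i $ j\<bar> \<le> R" for z i j
    using nR[of z] Finite_Cartesian_Product.norm_nth_le[of "D z $ i" j] Finite_Cartesian_Product.norm_nth_le[of "D z" i] by (simp add: real_norm_def)
  define f where "f z = D z$1$1 * D z$2$2 - D z$1$2 * D z$2$1" for z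
  have cf: "continuous_on (cbox 0 1) f" unfolding f_def by (intro continuous_intros cc)
  obtain zd where zdc: "zd \<in> cbox (0::real^2) 1" and zd: "\<forall>y\<in>cbox 0 1. f zd \<le> f y"
    using continuous_attains_inf[OF compact_cbox ne cf] by blast
  define \<delta> where "\<delta> = f zd"
  have dpos: "0 < \<delta>" using S2_facts(3)[OF D_spd[rule_format, of zd]] f_def \<delta>_def by simp
  have fd: "\<delta> \<le> f z" for z
  proof -
    obtain z' where "z' \<in> cbox 0 1" "D z = D z'" using per_red[OF D_per, of z] by blast
    then show ?thesis using zd \<delta>_def f_def by simp
  qed
  have R0: "0 \<le> R" using R_def by simp
  have "cond_num (D z) \<le> sqrt ((4 * R) * (4 * R / \<delta>))" for z
  proof -
    define A where "A = D z"
    have ddne: "A$1$1*A$2$2 - A$1$2*A$2$1 \<noteq> 0" using fd[of z] dpos f_def A_def by force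
    define dd where "dd = A$1$1*A$2$2 - A$1$2*A$2$1"
    have ddp: "\<delta> \<le> dd" using fd[of z] f_def A_def dd_def by simp
    have I: "matrix_inv A = vector[vector[A$2$2/dd, -A$1$2/dd], vector[-A$2$1/dd, A$1$1/dd]]"
      using minv2[OF ddne] dd_def by simp
    have eA: "\<bar>A $ i $ j\<bar> \<le> R" for i j using eR A_def by simp
    have o1: "onorm ((*v) A) \<le> 4 * R"
    proof (rule onorm_le)
      fix x
      have "norm (A *v x) \<le> (\<bar>A$1$1\<bar> + \<bar>A$1$2\<bar> + \<bar>A$2$1\<bar> + \<bar>A$2$2\<bar>) * norm x" by (rule norm_mv_le)
      also have "\<dots> \<le> (4 * R) * norm x" using eA[of 1 1] eA[of 1 2] eA[of 2 1] eA[of 2 2]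
        by (intro mult_right_mono) simp_all
      finally show "norm (A *v x) \<le> (4 * R) * norm x" .
    qed
    have eI: "\<bar>A $ i $ j / dd\<bar> \<le> R / \<delta>" for i j
    proof -
      have "\<bar>A $ i $ j / dd\<bar> = \<bar>A $ i $ j\<bar> / dd" using ddp dpos by simp
      also have "\<dots> \<le> R / dd" using eA ddp dpos by (simp add: divide_right_mono)
      also have "\<dots> \<le> R / \<delta>" using R0 ddp dpos by (simp add: divide_left_mono)
      finally show ?thesis .
    qed
    have o2: "onorm ((*v) (matrix_inv A)) \<le> 4 * R / \<delta>"
    proof (rule onorm_le)
      fix x
      have "norm (matrix_inv A *v x) \<le> (\<bar>A$2$2/dd\<bar> + \<bar>-A$1$2/dd\<bar> + \<bar>-A$2$1/dd\<bar> + \<bar>A$1$1/dd\<bar>) * norm x"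
        using norm_mv_le[of "matrix_inv A" x] unfolding I by simp
      also have "\<dots> \<le> (4 * R / \<delta>) * norm x" using eI[of 1 1] eI[of 1 2] eI[of 2 1] eI[of 2 2]
        by (intro mult_right_mono) simp_all
      finally show "norm (matrix_inv A *v x) \<le> (4 * R / \<delta>) * norm x" .
    qed
    have "onorm ((*v) A) * onorm ((*v) (matrix_inv A)) \<le> (4 * R) * (4 * R / \<delta>)"
      using o1 o2 by (intro mult_mono) (simp_all add: onorm_pos_le matrix_vector_mul_bounded_linear R0)
    then show ?thesis unfolding cond_num_def A_def by (rule real_sqrt_le_mono)
  qed
  then show ?thesis by blast
qed



lemma kappa_facts:
  assumes D_cont: "continuous_on UNIV D"
    and D_spd: "\<forall>z. D z \<in> S2plus"
    and D_per: "\<forall>z v. v \<in> Zvec \<longrightarrow> D (z + v) = D z"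
  shows "\<forall>z. cond_num (D z) \<le> kappa_bold D" "1 \<le> kappa_bold D"
proof -
  obtain K where K: "\<forall>z. cond_num (D z) \<le> K" using unif_bounds[OF assms] by blast
  have bdd: "bdd_above (range (\<lambda>z. cond_num (D z)))" using K by (auto intro: bdd_aboveI)
  show c: "\<forall>z. cond_num (D z) \<le> kappa_bold D"
    unfolding kappa_bold_def using bdd by (auto intro: cSup_upper)
  show "1 \<le> kappa_bold D" using c Mof_props(5)[of D 0, OF D_spd[rule_format, of 0]] by (meson order_trans)
qed

lemma qf_scaleM: "x \<bullet> ((t *\<^sub>R M) *v x) = t * qf M x"
  by (simp add: qf_def bil_def scaleR_matrix_vector_assoc[symmetric])

lemma qf_nonneg:
  assumes "D z \<in> S2plus" shows "0 \<le> qf (Mof D z) x"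
proof (rule ccontr)
  assume "\<not> 0 \<le> qf (Mof D z) x"
  then have "cond_num (D z) * qf (Mof D z) x < 0"
    using Mof_props(5)[of D z, OF assms] by (simp add: mult_pos_neg)
  then show False using Mof_props(4)[of D z, OF assms] by (smt (verit) zero_le_power2)
qed

lemma qf_boundsK:
  assumes "D z \<in> S2plus" "cond_num (D z) \<le> k"
  shows "qf (Mof D z) x \<le> k * (norm x)^2" "(norm x)^2 \<le> k * qf (Mof D z) x"
proof -
  have "cond_num (D z) * (norm x)^2 \<le> k * (norm x)^2" using assms(2) by (simp add: mult_right_mono)
  then show "qf (Mof D z) x \<le> k * (norm x)^2" using Mof_props(3)[of D z, OF assms(1)] by (meson order_trans)
  have "cond_num (D z) * qf (Mof D z) x \<le> k * qf (Mof D z) x"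
    using assms(2) qf_nonneg[of D z, OF assms(1)] by (simp add: mult_right_mono)
  then show "(norm x)^2 \<le> k * qf (Mof D z) x" using Mof_props(4)[of D z, OF assms(1)] by (meson order_trans)
qed

lemma inf_sq:
  fixes T :: "real set"
  assumes "T \<noteq> {}" "\<forall>t\<in>T. 0 \<le> t \<and> a \<le> t^2 * b" "0 \<le> a" "0 \<le> b"
  shows "a \<le> (Inf T)^2 * b"
proof -
  obtain t1 where t1: "t1 \<in> T" using assms(1) by blast
  show ?thesis
  proof (cases "b = 0")
    case True
    then have "a \<le> 0" using assms(2) t1 by auto
    then show ?thesis using True by simp
  next
    case False
    then have bp: "0 < b" using assms(4) by simp
    define r where "r = sqrt (a / b)"
    have "r \<le> t" if "t \<in> T" for t
    proof -
      have "a / b \<le> t^2" using assms(2) that bp by (simp add: pos_divide_le_eq)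
      then have "sqrt (a / b) \<le> sqrt (t^2)" by (rule real_sqrt_le_mono)
      then show ?thesis using assms(2) that r_def by simp
    qed
    then have "r \<le> Inf T" using assms(1) by (intro cInf_greatest) auto
    moreover have r0: "0 \<le> r" using r_def assms(3,4) by simp
    ultimately have "r^2 \<le> (Inf T)^2" by (intro power_mono) auto
    moreover have "r^2 = a / b" using r_def assms(3) bp by simp
    ultimately show ?thesis using bp by (simp add: pos_divide_le_eq)
  qed
qed

lemma tau_facts:
  assumes D_spd: "\<forall>z. D z \<in> S2plus" and cb: "\<forall>z. cond_num (D z) \<le> \<kappa>" and k1: "1 \<le> \<kappa>"
  shows "1 \<le> tau_pq D p q" "\<forall>x. qf (Mof D p) x \<le> (tau_pq D p q)^2 * qf (Mof D q) x"
    "\<forall>x. qf (Mof D q) x \<le> (tau_pq D p q)^2 * qf (Mof D p) x" "tau_pq D p q \<le> \<kappa>"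
proof -
  define qp where "qp = qf (Mof D p)"
  define qq where "qq = qf (Mof D q)"
  have qp0: "0 \<le> qp x" for x unfolding qp_def using qf_nonneg D_spd by blast
  have qq0: "0 \<le> qq x" for x unfolding qq_def using qf_nonneg D_spd by blast
  define P where "P t \<longleftrightarrow> 1 \<le> t \<and> loewner_le ((1 / t\<^sup>2) *\<^sub>R Mof D p) (Mof D q) \<and>
      loewner_le (Mof D q) (t\<^sup>2 *\<^sub>R Mof D p)" for t :: real
  have Piff: "P t \<longleftrightarrow> 1 \<le> t \<and> (\<forall>x. qp x \<le> t^2 * qq x) \<and> (\<forall>x. qq x \<le> t^2 * qp x)" for t
  proof -
    have "1 \<le> t \<Longrightarrow> ((1 / t\<^sup>2) * qp x \<le> qq x) = (qp x \<le> t^2 * qq x)" for x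
      by (simp add: field_simps)
    then show ?thesis unfolding P_def loewner_le_def qf_scaleM qp_def qq_def
      by (auto simp: qf_def bil_def)
  qed
  have bpq: "qp x \<le> \<kappa>^2 * qq x" "qq x \<le> \<kappa>^2 * qp x" for x
  proof -
    have a1: "qp x \<le> \<kappa> * (norm x)^2" using qf_boundsK(1) D_spd cb qp_def by blast
    have a2: "(norm x)^2 \<le> \<kappa> * qq x" using qf_boundsK(2) D_spd cb qq_def by blast
    have "\<kappa> * (norm x)^2 \<le> \<kappa> * (\<kappa> * qq x)" using a2 k1 by simp
    then show "qp x \<le> \<kappa>^2 * qq x" using a1 by (simp add: power2_eq_square algebra_simps)
    have a3: "qq x \<le> \<kappa> * (norm x)^2" using qf_boundsK(1) D_spd cb qq_def by blast
    have a4: "(norm x)^2 \<le> \<kappa> * qp x" using qf_boundsK(2) D_spd cb qp_def by blast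
    have "\<kappa> * (norm x)^2 \<le> \<kappa> * (\<kappa> * qp x)" using a4 k1 by simp
    then show "qq x \<le> \<kappa>^2 * qp x" using a3 by (simp add: power2_eq_square algebra_simps)
  qed
  have Pk: "P \<kappa>" using Piff bpq k1 by simp
  define T where "T = {t. P t}"
  have Tne: "T \<noteq> {}" using Pk T_def by blast
  have T1: "\<forall>t\<in>T. 1 \<le> t" using Piff T_def by simp
  have bddT: "bdd_below T" using T1 by (auto intro: bdd_belowI)
  define t0 where "t0 = Inf T"
  have t01: "1 \<le> t0" unfolding t0_def using Tne T1 by (intro cInf_greatest) auto
  have t0a: "qp x \<le> t0^2 * qq x" for x
    unfolding t0_def using Tne qp0 qq0 Piff T_def by (intro inf_sq) auto
  have t0b: "qq x \<le> t0^2 * qp x" for x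
    unfolding t0_def using Tne qp0 qq0 Piff T_def by (intro inf_sq) auto
  have Pt0: "P t0" using Piff t01 t0a t0b by simp
  have t0le: "t0 \<le> t" if "P t" for t unfolding t0_def using bddT that T_def by (intro cInf_lower) auto
  have tau: "tau_pq D p q = t0"
    unfolding tau_pq_def P_def[symmetric] by (rule Least_equality[of P t0, OF Pt0 t0le])
  show "1 \<le> tau_pq D p q" using tau t01 by simp
  show "\<forall>x. qf (Mof D p) x \<le> (tau_pq D p q)^2 * qf (Mof D q) x" using tau t0a qp_def qq_def by simp
  show "\<forall>x. qf (Mof D q) x \<le> (tau_pq D p q)^2 * qf (Mof D p) x" using tau t0b qp_def qq_def by simp
  show "tau_pq D p q \<le> \<kappa>" using tau t0le Pk by simp
qed

lemma tau_le_tauh: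
  assumes D_spd: "\<forall>z. D z \<in> S2plus" and cb: "\<forall>z. cond_num (D z) \<le> kappa_bold D" and k1: "1 \<le> kappa_bold D"
    and "norm (p - q) \<le> 2 * kappa_bold D * h"
  shows "tau_pq D p q \<le> tau_h D h"
proof -
  have "bdd_above {tau_pq D p q | p q. norm (p - q) \<le> 2 * kappa_bold D * h}"
    using tau_facts(4)[OF D_spd cb k1] by (auto intro!: bdd_aboveI)
  then show ?thesis unfolding tau_h_def using assms(4) by (auto intro!: cSup_upper)
qed



lemma key_numeric:
  fixes M M' :: "real^2^2" and e f :: "real^2" and \<kappa> \<tau> :: real
  assumes sym: "M$1$2 = M$2$1" and det1: "det M = 1" and R: "reduced_basis M e f"
    and low: "\<forall>x. (norm x)^2 \<le> \<kappa> * qf M x" and k1: "1 \<le> \<kappa>"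
    and mu: "\<bar>bil M e f\<bar> \<le> 1 / (4 * \<kappa>)"
    and t1: "1 \<le> \<tau>" and tb: "\<tau>^4 \<le> 1 + 1 / (3 * \<kappa>^2)"
    and c1: "\<forall>x. qf M x \<le> \<tau>^2 * qf M' x" and c2: "\<forall>x. qf M' x \<le> \<tau>^2 * qf M x"
  shows "keyP M' e f" "norm e \<le> 2 * \<kappa>"
proof -
  have Z: "is_Zbasis e f" and emin: "\<forall>v\<in>Zvec - {0}. qf M e \<le> qf M v"
    using R unfolding reduced_basis_def Mnorm_qf real_sqrt_le_iff by auto
  have eZ: "e \<in> Zvec" "e \<noteq> 0" "f \<in> Zvec" "f \<noteq> 0"
    using Z Zbasis_nz Zbasis_sym[OF Z] is_Zbasis_def by blast+
  define E where "E = qf M e"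
  define F where "F = qf M f"
  define \<beta> where "\<beta> = bil M e f"
  define m where "m = \<bar>\<beta>\<bar>"
  have kpos: "0 < \<kappa>" using k1 by simp
  have dt1: "(dt e f)^2 = 1"
  proof -
    have "(dt e f)^2 = \<bar>dt e f\<bar>^2" by simp
    then show ?thesis using Zbasis_dt[OF Z] by simp
  qed
  have EF: "E * F = 1 + m^2" using gram[OF sym, of e f] det1 dt1 unfolding E_def F_def m_def \<beta>_def by simp
  have EleF: "E \<le> F" using emin eZ E_def F_def by simp
  have ne: "1 \<le> (norm e)^2" using Zvec_norm_ge1 eZ by simp
  have ne2: "(norm e)^2 \<le> \<kappa> * E" using low E_def by simp
  have kE: "1 \<le> \<kappa> * E" using ne ne2 by simp
  have Epos: "0 < E"
  proof (rule ccontr)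
    assume "\<not> 0 < E"
    then have "\<kappa> * E \<le> 0" using kpos by (simp add: mult_nonneg_nonpos)
    then show False using kE by simp
  qed
  have invk: "1 / \<kappa> \<le> E" using kE kpos by (simp add: field_simps)
  have m0: "0 \<le> m" using m_def by simp
  have mk: "m \<le> 1 / (4 * \<kappa>)" using mu m_def \<beta>_def by simp
  have "1 / (4 * \<kappa>) = (1 / \<kappa>) / 4" by simp
  then have mE: "m \<le> E / 4" using mk invk by linarith
  have "1 / (4 * \<kappa>) \<le> 1 / 4" using k1 by (simp add: field_simps)
  then have m14: "m \<le> 1/4" using mk by linarith
  have msq: "m^2 \<le> (1/4)^2" using m14 m0 by (intro power_mono) auto
  have F0: "0 < F" using EleF Epos by simp
  define \<epsilon> where "\<epsilon> = \<tau>^4 - 1"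
  have e0: "0 \<le> \<epsilon>" using t1 \<epsilon>_def by (simp add: one_le_power)
  have k2: "0 < 3 * \<kappa>^2" using kpos by simp
  have "\<epsilon> \<le> 1 / (3 * \<kappa>^2)" using tb \<epsilon>_def by simp
  then have "3 * \<kappa>^2 * \<epsilon> \<le> 3 * \<kappa>^2 * (1 / (3 * \<kappa>^2))" using k2 by (intro mult_left_mono) auto
  then have e1: "3 * \<kappa>^2 * \<epsilon> \<le> 1" using k2 by simp
  have "(3 * \<kappa>^2 * E) * (F * \<epsilon>) = (3 * \<kappa>^2 * \<epsilon>) * (E * F)" by (simp add: algebra_simps)
  also have "\<dots> \<le> 1 * (E * F)" using e1 EF by (intro mult_right_mono) (auto simp: add_nonneg_nonneg)
  also have "\<dots> \<le> 17/16" using EF msq by (simp add: power_divide)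
  finally have A: "(3 * \<kappa>^2 * E) * (F * \<epsilon>) \<le> 17/16" .
  have kE2: "1 \<le> (\<kappa> * E)^2" using kE by (simp add: one_le_power)
  have "(3 * \<kappa>^2 * E) * (E / 2) \<le> (3 * \<kappa>^2 * E) * (E - 2 * m)" using mE Epos k2
    by (intro mult_left_mono) auto
  moreover have "(3 * \<kappa>^2 * E) * (E / 2) = 3/2 * (\<kappa> * E)^2" by (simp add: algebra_simps power2_eq_square)
  ultimately have B: "3/2 \<le> (3 * \<kappa>^2 * E) * (E - 2 * m)" using kE2 by linarith
  have "(3 * \<kappa>^2 * E) * (F * \<epsilon>) < (3 * \<kappa>^2 * E) * (E - 2 * m)" using A B by linarith
  then have C: "F * \<epsilon> < E - 2 * m" using k2 Epos by (simp add: mult_less_cancel_left_pos)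
  have tF: "\<tau>^4 * F < E + F - 2 * m" using C unfolding \<epsilon>_def by (simp add: algebra_simps)
  have tpos: "0 < \<tau>^2" using t1 by simp
  have t22: "\<tau>^2 * (\<tau>^2 * X) = \<tau>^4 * X" for X by (simp add: power2_eq_square power4_eq_xxxx algebra_simps)
  show "keyP M' e f"
    unfolding keyP_def
  proof (intro allI impI)
    fix a b :: int assume a: "a \<noteq> 0" and b: "b \<noteq> 0"
    define x where "x = (of_int a :: real)"
    define y where "y = (of_int b :: real)"
    define v where "v = of_int a *\<^sub>R e + of_int b *\<^sub>R f"
    have x1: "1 \<le> x^2" using int_sq_ge1[OF a] x_def by simp
    have y1: "1 \<le> y^2" using int_sq_ge1[OF b] y_def by simp
    have Qv: "qf M v = x^2 * E + 2 * x * y * \<beta> + y^2 * F"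
      unfolding v_def qf_lin2[OF sym] x_def y_def E_def F_def \<beta>_def by simp
    have "0 \<le> (\<bar>x\<bar> - \<bar>y\<bar>)^2" by simp
    then have xy: "2 * \<bar>x\<bar> * \<bar>y\<bar> \<le> x^2 + y^2" by (simp add: power2_eq_square algebra_simps)
    have "\<bar>2 * x * y * \<beta>\<bar> = (2 * \<bar>x\<bar> * \<bar>y\<bar>) * m" unfolding m_def by (simp add: abs_mult)
    moreover have "(2 * \<bar>x\<bar> * \<bar>y\<bar>) * m \<le> (x^2 + y^2) * m" using xy m0 by (rule mult_right_mono)
    ultimately have "- ((x^2 + y^2) * m) \<le> 2 * x * y * \<beta>" by (smt (verit) abs_ge_minus_self)
    then have "x^2 * (E - m) + y^2 * (F - m) \<le> qf M v" unfolding Qv by (simp add: algebra_simps)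
    moreover have "1 * (E - m) \<le> x^2 * (E - m)" using x1 mE Epos by (intro mult_right_mono) auto
    moreover have "1 * (F - m) \<le> y^2 * (F - m)" using y1 mE EleF Epos by (intro mult_right_mono) auto
    ultimately have Qv2: "E + F - 2 * m \<le> qf M v" by simp
    have "qf M v \<le> \<tau>^2 * qf M' v" using c1 by simp
    then have V: "\<tau>^4 * F < \<tau>^2 * qf M' v" using Qv2 tF by simp
    have "qf M' f \<le> \<tau>^2 * F" using c2 F_def by simp
    then have "\<tau>^2 * qf M' f \<le> \<tau>^2 * (\<tau>^2 * F)" using tpos by (intro mult_left_mono) auto
    then have Ff: "\<tau>^2 * qf M' f \<le> \<tau>^4 * F" unfolding t22 .
    have "qf M' e \<le> \<tau>^2 * E" using c2 E_def by simp
    then have "\<tau>^2 * qf M' e \<le> \<tau>^2 * (\<tau>^2 * E)" using tpos by (intro mult_left_mono) auto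
    moreover have "\<tau>^2 * (\<tau>^2 * E) \<le> \<tau>^2 * (\<tau>^2 * F)" using EleF tpos by (intro mult_left_mono) auto
    ultimately have "\<tau>^2 * qf M' e \<le> \<tau>^2 * (\<tau>^2 * F)" by linarith
    then have Fe: "\<tau>^2 * qf M' e \<le> \<tau>^4 * F" unfolding t22 .
    have "\<tau>^2 * qf M' e < \<tau>^2 * qf M' v" "\<tau>^2 * qf M' f < \<tau>^2 * qf M' v" using V Ff Fe by linarith+
    then show "qf M' e < qf M' (of_int a *\<^sub>R e + of_int b *\<^sub>R f) \<and> qf M' f < qf M' (of_int a *\<^sub>R e + of_int b *\<^sub>R f)"
      using tpos v_def by simp
  qed
  have "E * E \<le> E * F" using EleF Epos by simp
  then have "E * E \<le> 17/16" using EF msq by (simp add: power_divide)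
  then have E2: "E \<le> 2"
  proof -
    assume h: "E * E \<le> 17/16"
    show "E \<le> 2"
    proof (rule ccontr)
      assume "\<not> E \<le> 2"
      then have "2 * 2 \<le> E * E" by (intro mult_mono) auto
      then show False using h by simp
    qed
  qed
  have "\<kappa> * E \<le> \<kappa> * 2" using E2 kpos by (intro mult_left_mono) auto
  then have "(norm e)^2 \<le> \<kappa> * 2" using ne2 by linarith
  also have "\<dots> \<le> (2 * \<kappa>)^2" using k1 by (simp add: power2_eq_square)
  finally have "(norm e)^2 \<le> (2 * \<kappa>)^2" .
  then show "norm e \<le> 2 * \<kappa>" by (rule power2_le_imp_le) (use kpos in simp)
qed



definition RB :: "real^2^2 \<Rightarrow> (real^2) \<times> (real^2)" where
  "RB M = (SOME b. reduced_basis M (fst b) (snd b))"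

lemma sW_eq: "stencilW D V p = (if mu (Mof D p) \<le> theta_0 D then
   {fst (RB (Mof D p)), - fst (RB (Mof D p)), snd (RB (Mof D p)), - snd (RB (Mof D p))} else V p)"
  unfolding stencilW_def RB_def by (simp add: case_prod_beta)

lemma sW'_eq: "stencilW' D V p = (if mu (Mof D p) \<le> theta_0 D then
   {fst (RB (Mof D p)), - fst (RB (Mof D p)), snd (RB (Mof D p)), - snd (RB (Mof D p)),
    fst (RB (Mof D p)) + snd (RB (Mof D p)), - (fst (RB (Mof D p)) + snd (RB (Mof D p))),
    fst (RB (Mof D p)) - snd (RB (Mof D p)), - (fst (RB (Mof D p)) - snd (RB (Mof D p)))} else V p)"
  unfolding stencilW'_def RB_def by (simp add: case_prod_beta)

lemma mu_eq: "mu M = \<bar>bil M (fst (RB M)) (snd (RB M))\<bar>"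
  unfolding mu_def RB_def bil_def by (simp add: case_prod_beta)

lemma RB_red:
  assumes "D p \<in> S2plus" "cond_num (D p) \<le> k"
  shows "reduced_basis (Mof D p) (fst (RB (Mof D p))) (snd (RB (Mof D p)))"
proof -
  have k1: "1 \<le> k" using Mof_props(5)[of D p, OF assms(1)] assms(2) by simp
  have "\<forall>x. (1/k) * (norm x)^2 \<le> qf (Mof D p) x"
  proof
    fix x
    have "(norm x)^2 \<le> k * qf (Mof D p) x" using qf_boundsK(2)[of D p, OF assms] .
    then show "(1/k) * (norm x)^2 \<le> qf (Mof D p) x" using k1 by (simp add: field_simps)
  qed
  then have "\<exists>e f. reduced_basis (Mof D p) e f"
    using exists_reduced[OF Mof_props(1)[of D p, OF assms(1)], of "1/k"] k1 by simp
  then have "\<exists>b. reduced_basis (Mof D p) (fst b) (snd b)" by auto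
  then show ?thesis unfolding RB_def by (rule someI_ex)
qed

lemma powr4: "0 < X \<Longrightarrow> (X powr (1/4)) ^ 4 = (X::real)"
  by (simp add: powr_power)

lemma neighbor:
  assumes D_spd: "\<forall>z. D z \<in> S2plus"
    and cb: "\<forall>z. cond_num (D z) \<le> kappa_bold D" and k1: "1 \<le> kappa_bold D"
    and V_def: "\<forall>p. \<exists>e0 e1 e2. obtuse_superbase (Mof D p) e0 e1 e2 \<and> V p = {e0, -e0, e1, -e1, e2, -e2}"
    and h0: "0 \<le> h"
    and tau_small: "tau_h D h \<le> (1 + 1 / (3 * (kappa_bold D)\<^sup>2)) powr (1/4)"
    and mz: "mu (Mof D z) \<le> theta_0 D"
    and w: "w \<in> {fst (RB (Mof D z)), - fst (RB (Mof D z))}"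
    and Mq: "Mof D q = Mof D (z + h *\<^sub>R w)"
  shows "{fst (RB (Mof D z)), - fst (RB (Mof D z)), snd (RB (Mof D z)), - snd (RB (Mof D z))} \<subseteq> stencilW D V q"
proof -
  define \<kappa> where "\<kappa> = kappa_bold D"
  define M where "M = Mof D z"
  define e where "e = fst (RB M)"
  define f where "f = snd (RB M)"
  have R: "reduced_basis M e f" using RB_red[of D z, OF _ cb[rule_format]] D_spd M_def e_def f_def by blast
  have Z: "is_Zbasis e f" using R reduced_basis_def by blast
  have sym: "M$1$2 = M$2$1" using Mof_props(1)[of D z] D_spd M_def by blast
  have det1: "det M = 1" using Mof_props(2)[of D z] D_spd M_def by blast
  have low: "\<forall>x. (norm x)^2 \<le> \<kappa> * qf M x" using qf_boundsK(2)[of D z] D_spd cb M_def \<kappa>_def by blast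
  have k1': "1 \<le> \<kappa>" using k1 \<kappa>_def by simp
  have muM: "\<bar>bil M e f\<bar> \<le> 1 / (4 * \<kappa>)" using mz mu_eq[of M] M_def e_def f_def \<kappa>_def theta_0_def by simp
  have ne: "norm e \<le> 2 * \<kappa>"
    using key_numeric(2)[OF sym det1 R low k1' muM, of 1 M] by simp
  define p' where "p' = z + h *\<^sub>R w"
  define \<tau> where "\<tau> = tau_pq D z p'"
  have nw: "norm w = norm e" using w e_def M_def by auto
  have "norm (z - p') = h * norm w" unfolding p'_def using h0 by simp
  moreover have "h * norm e \<le> h * (2 * \<kappa>)" using ne h0 by (rule mult_left_mono)
  ultimately have "norm (z - p') \<le> 2 * \<kappa> * h" using nw by (simp add: mult.commute)
  then have tle: "\<tau> \<le> tau_h D h" unfolding \<tau>_def \<kappa>_def using tau_le_tauh[OF D_spd cb k1] by blast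
  have t1: "1 \<le> \<tau>" unfolding \<tau>_def using tau_facts(1)[OF D_spd cb k1] .
  define X where "X = 1 + 1 / (3 * \<kappa>^2)"
  have Xp: "0 < X" unfolding X_def using k1' by (simp add: add_pos_nonneg)
  have "\<tau> \<le> X powr (1/4)" using tle tau_small X_def \<kappa>_def by simp
  then have "\<tau>^4 \<le> (X powr (1/4))^4" using t1 by (intro power_mono) auto
  then have tb: "\<tau>^4 \<le> 1 + 1 / (3 * \<kappa>^2)" using powr4[OF Xp] X_def by simp
  define M' where "M' = Mof D q"
  have c1: "\<forall>x. qf M x \<le> \<tau>^2 * qf M' x"
    using tau_facts(2)[OF D_spd cb k1, where p=z and q=p'] Mq M_def M'_def \<tau>_def p'_def by simp
  have c2: "\<forall>x. qf M' x \<le> \<tau>^2 * qf M x"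
    using tau_facts(3)[OF D_spd cb k1, where p=z and q=p'] Mq M_def M'_def \<tau>_def p'_def by simp
  have K: "keyP M' e f" using key_numeric(1)[OF sym det1 R low k1' muM t1 tb c1 c2] .
  show ?thesis
  proof (cases "mu (Mof D q) \<le> theta_0 D")
    case True
    have R': "reduced_basis M' (fst (RB M')) (snd (RB M'))"
      using RB_red[of D q, OF _ cb[rule_format]] D_spd M'_def by blast
    have "{e, -e, f, -f} \<subseteq> {fst (RB M'), - fst (RB M'), snd (RB M'), - snd (RB M')}"
      by (rule red_contains[OF Z K R'])
    then show ?thesis using True sW_eq[of D V q] M'_def e_def f_def M_def by simp
  next
    case False
    obtain e0 e1 e2 where SB: "obtuse_superbase M' e0 e1 e2" and Vq: "V q = {e0, -e0, e1, -e1, e2, -e2}"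
      using V_def M'_def by blast
    have sym': "M'$1$2 = M'$2$1" using Mof_props(1)[of D q] D_spd M'_def by blast
    have "{e, -e, f, -f} \<subseteq> {e0, -e0, e1, -e1, e2, -e2}" by (rule sb_contains[OF Z K sym' SB])
    then show ?thesis using False sW_eq[of D V q] Vq e_def f_def M_def by simp
  qed
qed



definition rr :: "real^2 \<Rightarrow> real^2" where
  "rr x = (\<chi> i. x$i - of_int \<lfloor>x$i\<rfloor>)"

lemma rr_comp: "rr x $ i = x$i - of_int \<lfloor>x$i\<rfloor>"
  by (simp add: rr_def)

lemma rr_diff_Z: "x - rr x \<in> Zvec"
  by (simp add: Zvec_def rr_def)

lemma per_rr:
  assumes "\<forall>z v. v \<in> Zvec \<longrightarrow> g (z + v) = g z"
  shows "g x = g (rr x)"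
proof -
  have "x = rr x + (x - rr x)" by simp
  then show ?thesis using assms rr_diff_Z by metis
qed

lemma rr_shift: "m \<in> Zvec \<Longrightarrow> rr (x + m) = rr x"
proof -
  assume m: "m \<in> Zvec"
  have "rr (x + m) $ i = rr x $ i" for i
  proof -
    obtain k where k: "m$i = of_int k" using m unfolding Zvec_def by (metis Ints_cases mem_Collect_eq)
    have "\<lfloor>x$i + m$i\<rfloor> = \<lfloor>x$i\<rfloor> + k" unfolding k by simp
    then show ?thesis unfolding rr_comp using k by simp
  qed
  then show ?thesis by (simp add: vec_eq_iff)
qed

lemma Omega_iff:
  assumes "0 < n" "h = 1 / real n"
  shows "z \<in> Omega h \<longleftrightarrow> (\<forall>i. 0 \<le> z$i \<and> z$i < 1 \<and> z$i * real n \<in> \<int>)"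
  unfolding Omega_def using assms by simp

lemma rr_Omega:
  assumes n: "0 < n" "h = 1 / real n" and z: "z \<in> Omega h" and w: "w \<in> Zvec"
  shows "rr (z + h *\<^sub>R w) \<in> Omega h"
proof -
  have "0 \<le> rr (z + h *\<^sub>R w) $ i \<and> rr (z + h *\<^sub>R w) $ i < 1 \<and> rr (z + h *\<^sub>R w) $ i * real n \<in> \<int>" for i
  proof -
    define x where "x = (z + h *\<^sub>R w) $ i"
    have a: "of_int \<lfloor>x\<rfloor> \<le> x" "x < of_int \<lfloor>x\<rfloor> + 1"
      by (rule of_int_floor_le, rule real_of_int_floor_add_one_gt)
    have zi: "z$i * real n \<in> \<int>" using z Omega_iff[OF n] by blast
    have wi: "w$i \<in> \<int>" using w Zvec_def by blast
    have "x * real n = z$i * real n + w$i" unfolding x_def using n by (simp add: field_simps)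
    then have "x * real n \<in> \<int>" using zi wi by simp
    then have "(x - of_int \<lfloor>x\<rfloor>) * real n \<in> \<int>" by (simp add: algebra_simps)
    moreover have "0 \<le> x - of_int \<lfloor>x\<rfloor>" "x - of_int \<lfloor>x\<rfloor> < 1" using a by linarith+
    ultimately show ?thesis unfolding rr_comp x_def[symmetric] by simp
  qed
  then show ?thesis using Omega_iff[OF n] by blast
qed

lemma rr_id: assumes n: "0 < n" "h = 1 / real n" and z: "z \<in> Omega h" shows "rr z = z"
proof -
  have "rr z $ i = z $ i" for i
  proof -
    have "0 \<le> z$i" "z$i < 1" using z Omega_iff[OF n] by blast+
    then have "\<lfloor>z$i\<rfloor> = 0" by (simp add: floor_eq_iff)
    then show ?thesis by (simp add: rr_comp)
  qed
  then show ?thesis by (simp add: vec_eq_iff)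
qed

lemma rr_inv:
  assumes n: "0 < n" "h = 1 / real n" and z: "z \<in> Omega h" and w: "w \<in> Zvec"
  shows "rr (rr (z + h *\<^sub>R w) + h *\<^sub>R (- w)) = z"
proof -
  have "rr (z + h *\<^sub>R w) + h *\<^sub>R (- w) = z + (rr (z + h *\<^sub>R w) - (z + h *\<^sub>R w))" by (simp add: algebra_simps)
  moreover have "rr (z + h *\<^sub>R w) - (z + h *\<^sub>R w) \<in> Zvec" using rr_diff_Z Zvec_uminus by (metis minus_diff_eq)
  ultimately show ?thesis using rr_shift rr_id[OF n z] by metis
qed

lemma reindex_Omega:
  assumes n: "0 < n" "h = 1 / real n" and w: "w \<in> Zvec"
  shows "(\<Sum>z\<in>Omega h. H (rr (z + h *\<^sub>R w))) = (\<Sum>q\<in>Omega h. H q)"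
proof (rule sum.reindex_bij_witness[where i = "\<lambda>q. rr (q + h *\<^sub>R (- w))" and j = "\<lambda>z. rr (z + h *\<^sub>R w)"])
  have w': "- w \<in> Zvec" using w Zvec_uminus by blast
  show "\<And>a. a \<in> Omega h \<Longrightarrow> rr (rr (a + h *\<^sub>R w) + h *\<^sub>R - w) = a" using rr_inv[OF n _ w] by blast
  show "\<And>a. a \<in> Omega h \<Longrightarrow> rr (a + h *\<^sub>R w) \<in> Omega h" using rr_Omega[OF n _ w] by blast
  show "\<And>b. b \<in> Omega h \<Longrightarrow> rr (rr (b + h *\<^sub>R - w) + h *\<^sub>R w) = b" using rr_inv[OF n _ w'] by simp
  show "\<And>b. b \<in> Omega h \<Longrightarrow> rr (b + h *\<^sub>R - w) \<in> Omega h" using rr_Omega[OF n _ w'] by blast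
qed simp

lemma finite_Omega:
  assumes n: "0 < n" "h = 1 / real n"
  shows "finite (Omega h)"
proof -
  have "Omega h \<subseteq> (\<lambda>v. (1 / real n) *\<^sub>R v) ` {v \<in> Zvec. (norm v)^2 \<le> 2 * (real n)^2}"
  proof
    fix z assume z: "z \<in> Omega h"
    define v where "v = real n *\<^sub>R z"
    have c: "0 \<le> z$i \<and> z$i < 1 \<and> z$i * real n \<in> \<int>" for i using z Omega_iff[OF n] by blast
    have "v \<in> Zvec" unfolding v_def Zvec_def using c by (simp add: mult.commute)
    moreover have "(norm v)^2 \<le> 2 * (real n)^2"
    proof -
      have "(z$1)^2 \<le> 1" "(z$2)^2 \<le> 1" using c[of 1] c[of 2] by (simp_all add: power_le_one)
      then have "(norm z)^2 \<le> 2" by (simp add: norm2sq)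
      then have "(real n)^2 * (norm z)^2 \<le> (real n)^2 * 2" by (simp add: mult_left_mono)
      then show ?thesis unfolding v_def by (simp add: power_mult_distrib mult.commute)
    qed
    moreover have "z = (1 / real n) *\<^sub>R v" unfolding v_def using n by simp
    ultimately show "z \<in> (\<lambda>v. (1 / real n) *\<^sub>R v) ` {v \<in> Zvec. (norm v)^2 \<le> 2 * (real n)^2}" by blast
  qed
  then show ?thesis using finite_Zball finite_subset by blast
qed



lemma sum_insert_le:
  fixes f :: "'a \<Rightarrow> real"
  assumes "finite A" "\<forall>x. 0 \<le> f x"
  shows "sum f (insert a A) \<le> f a + sum f A"
  using assms by (cases "a \<in> A") (auto simp: insert_absorb sum_nonneg add_increasing)

lemma pair_le_sum:
  fixes f :: "'a \<Rightarrow> real"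
  assumes "finite A" "\<forall>x. 0 \<le> f x" "a \<noteq> b" "a \<in> A" "b \<in> A"
  shows "f a + f b \<le> sum f A"
proof -
  have "sum f {a, b} \<le> sum f A" using assms by (intro sum_mono2) auto
  then show ?thesis using assms(3) by simp
qed

lemma sq_split: "((x::real) - y)^2 \<le> 2 * (x - m)^2 + 2 * (m - y)^2"
proof -
  have "0 \<le> ((x - m) - (m - y))^2" by simp
  then show ?thesis by (simp add: power2_eq_square algebra_simps)
qed

lemma card_le6: "card {a, b, c, d, e, f} \<le> 6"
proof -
  have "{a, b, c, d, e, f} = set [a, b, c, d, e, f]" by simp
  then show ?thesis using card_length[of "[a, b, c, d, e, f]"] by simp
qed

lemma card_le4: "card {a, b, c, d} \<le> 6"
proof -
  have "{a, b, c, d} = set [a, b, c, d]" by simp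
  then show ?thesis using card_length[of "[a, b, c, d]"] by simp
qed


theorem mainTheorem19:
  fixes D :: "real^2 \<Rightarrow> real^2^2" and V :: "real^2 \<Rightarrow> (real^2) set"
    and n :: nat and h :: real and u :: "real^2 \<Rightarrow> real"
  assumes D_cont: "continuous_on UNIV D"
    and D_spd: "\<forall>z. D z \<in> S2plus"
    and D_per: "\<forall>z v. v \<in> Zvec \<longrightarrow> D (z + v) = D z"
    and V_def: "\<forall>p. \<exists>e0 e1 e2. obtuse_superbase (Mof D p) e0 e1 e2 \<and>
                      V p = {e0, -e0, e1, -e1, e2, -e2}"
    and n_pos: "0 < n"
    and h_def: "h = 1 / real n"
    and tau_small: "tau_h D h \<le> (1 + 1 / (3 * (kappa_bold D)\<^sup>2)) powr (1/4)"
    and theta_small: "theta_h D h \<le> 1 / (4 * kappa_bold D)"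
    and u_per: "\<forall>z v. v \<in> Zvec \<longrightarrow> u (z + v) = u z"
  shows "energy (stencilW' D V) h u \<le> 17 * energy (stencilW D V) h u"
proof -
  have nn: "0 < n" "h = 1 / real n" using n_pos h_def by auto
  have h0: "0 \<le> h" using h_def by simp
  have cb: "\<forall>z. cond_num (D z) \<le> kappa_bold D" and k1: "1 \<le> kappa_bold D"
    using kappa_facts[OF D_cont D_spd D_per] by auto
  define W where "W = stencilW D V"
  define W' where "W' = stencilW' D V"
  define T where "T q g = (u (q + h *\<^sub>R g) - u q)^2" for q g
  define G where "G q = (\<Sum>g\<in>W q. T q g)" for q
  have T0: "0 \<le> T q g" for q g unfolding T_def by simp
  have G0: "0 \<le> G q" for q unfolding G_def using T0 by (simp add: sum_nonneg)
  have Tper: "T x g = T (rr x) g" for x g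
  proof -
    have m: "x - rr x \<in> Zvec" by (rule rr_diff_Z)
    have "u (x + h *\<^sub>R g) = u ((rr x + h *\<^sub>R g) + (x - rr x))" by (simp add: algebra_simps)
    also have "\<dots> = u (rr x + h *\<^sub>R g)" using u_per m by blast
    finally have a: "u (x + h *\<^sub>R g) = u (rr x + h *\<^sub>R g)" .
    have b: "u x = u (rr x)" using per_rr[of u x] u_per by blast
    show ?thesis unfolding T_def a b ..
  qed
  have Mper: "Mof D x = Mof D (rr x)" for x
  proof -
    have "D x = D (rr x)" using per_rr[of D x] D_per by blast
    then show ?thesis unfolding Mof_def by simp
  qed
  have finW: "finite (W q) \<and> card (W q) \<le> 6" for q
  proof (cases "mu (Mof D q) \<le> theta_0 D")
    case True then show ?thesis unfolding W_def sW_eq using card_le4 by simp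
  next
    case False
    obtain e0 e1 e2 where "V q = {e0, -e0, e1, -e1, e2, -e2}" using V_def by blast
    then show ?thesis unfolding W_def sW_eq using False card_le6 by simp
  qed
  have finO: "finite (Omega h)" by (rule finite_Omega[OF nn])
  define red where "red z \<longleftrightarrow> mu (Mof D z) \<le> theta_0 D" for z
  define ee where "ee z = fst (RB (Mof D z))" for z
  define ff where "ff z = snd (RB (Mof D z))" for z
  define S where "S z = (if red z then {ee z, - ee z} else {})" for z
  have Zb: "is_Zbasis (ee z) (ff z)" for z
  proof -
    have "reduced_basis (Mof D z) (ee z) (ff z)"
      using RB_red[of D z, OF D_spd[rule_format] cb[rule_format]] ee_def ff_def by simp
    then show ?thesis unfolding reduced_basis_def by blast
  qed
  have SZ: "S z \<subseteq> Zvec" for z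
    using Zb[of z] unfolding S_def is_Zbasis_def by (auto intro: Zvec_uminus)
  have Sfin: "finite (S z)" for z unfolding S_def by simp
  have nb: "red z \<Longrightarrow> w \<in> {ee z, - ee z} \<Longrightarrow>
      {ee z, - ee z, ff z, - ff z} \<subseteq> W (rr (z + h *\<^sub>R w))" for z w
    unfolding W_def red_def ee_def ff_def
    by (rule neighbor[OF D_spd cb k1 V_def h0 tau_small]) (auto simp: Mper[symmetric])
  have SW: "w \<in> S z \<Longrightarrow> w \<in> W (rr (z + h *\<^sub>R w))" for z w
    using nb unfolding S_def by (cases "red z") auto
  have split: "T x (a + b) \<le> 2 * T (x + h *\<^sub>R a) b + 2 * T x a" for x a b
  proof -
    have e: "x + h *\<^sub>R (a + b) = (x + h *\<^sub>R a) + h *\<^sub>R b" by (simp add: algebra_simps)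
    show ?thesis unfolding T_def e using sq_split[of "u ((x + h *\<^sub>R a) + h *\<^sub>R b)" "u x" "u (x + h *\<^sub>R a)"]
      by simp
  qed
  have point: "(\<Sum>g\<in>W' z. T z g) \<le> 5 * G z + 2 * (\<Sum>w\<in>S z. G (rr (z + h *\<^sub>R w)))" for z
  proof (cases "red z")
    case False
    have nr: "\<not> mu (Mof D z) \<le> theta_0 D" using False red_def by simp
    have a: "W' z = W z" unfolding W_def W'_def sW_eq sW'_eq using nr by simp
    have b: "S z = {}" unfolding S_def using False by simp
    have "(\<Sum>g\<in>W' z. T z g) = G z" unfolding a G_def ..
    then show ?thesis unfolding b using G0[of z] by simp
  next
    case True
    define e where "e = ee z"
    define f where "f = ff z"
    have ne: "e \<noteq> 0" "f \<noteq> 0" using Zbasis_nz[OF Zb[of z]] Zbasis_nz[OF Zbasis_sym[OF Zb[of z]]] e_def f_def by simp_all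
    have nme: "e \<noteq> - e" "f \<noteq> - f" using ne by (simp_all add: vec2_eq)
    have rz: "mu (Mof D z) \<le> theta_0 D" using True red_def by simp
    have Wz: "W z = {e, -e, f, -f}" unfolding W_def sW_eq e_def ee_def f_def ff_def using rz by simp
    have W'z0: "W' z = {e, -e, f, -f, e + f, - (e + f), e - f, - (e - f)}"
      unfolding W'_def sW'_eq e_def ee_def f_def ff_def using rz by simp
    have W'z: "W' z = insert (e + f) (insert (- (e + f)) (insert (e - f) (insert (- (e - f)) (W z))))"
      unfolding W'z0 Wz by (simp only: insert_commute)
    have Sz: "S z = {e, -e}" using True unfolding S_def e_def by simp
    define q1 where "q1 = rr (z + h *\<^sub>R e)"
    define q2 where "q2 = rr (z + h *\<^sub>R (- e))"
    have W1: "{e, -e, f, -f} \<subseteq> W q1" using nb[OF True, of e] q1_def e_def f_def by simp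
    have W2: "{e, -e, f, -f} \<subseteq> W q2" using nb[OF True, of "- e"] q2_def e_def f_def by simp
    have fW: "finite (W q)" for q using finW by blast
    have TT: "\<forall>g. 0 \<le> T z g" using T0 by blast
    have "(\<Sum>g\<in>W' z. T z g) \<le> T z (e + f) + T z (- (e + f)) + T z (e - f) + T z (- (e - f)) + G z"
    proof -
      have fz: "finite (W z)" using fW by blast
      have "(\<Sum>g\<in>W' z. T z g) \<le> T z (e + f) + (T z (- (e + f)) + (T z (e - f) + (T z (- (e - f)) + G z)))"
        unfolding W'z G_def
        by (intro order_trans[OF sum_insert_le[OF _ TT]] add_left_mono) (simp_all add: fz)
      then show ?thesis by simp
    qed
    moreover have "T z (e + f) \<le> 2 * T q1 f + 2 * T z e"
      using split[of z e f] Tper[of "z + h *\<^sub>R e"] q1_def by simp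
    moreover have "T z (- (e + f)) \<le> 2 * T q2 (- f) + 2 * T z (- e)"
      using split[of z "- e" "- f"] Tper[of "z + h *\<^sub>R (- e)"] q2_def by (simp add: algebra_simps)
    moreover have "T z (e - f) \<le> 2 * T q1 (- f) + 2 * T z e"
      using split[of z e "- f"] Tper[of "z + h *\<^sub>R e"] q1_def by (simp add: algebra_simps)
    moreover have "T z (- (e - f)) \<le> 2 * T q2 f + 2 * T z (- e)"
      using split[of z "- e" f] Tper[of "z + h *\<^sub>R (- e)"] q2_def by (simp add: algebra_simps)
    moreover have "T z e + T z (- e) \<le> G z"
      unfolding G_def by (rule pair_le_sum) (use fW TT nme Wz in auto)
    moreover have "T q1 f + T q1 (- f) \<le> G q1"
      unfolding G_def by (rule pair_le_sum) (use fW T0 nme W1 in auto)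
    moreover have "T q2 f + T q2 (- f) \<le> G q2"
      unfolding G_def by (rule pair_le_sum) (use fW T0 nme W2 in auto)
    moreover have "(\<Sum>w\<in>S z. G (rr (z + h *\<^sub>R w))) = G q1 + G q2"
      unfolding Sz q1_def q2_def using nme by simp
    ultimately show ?thesis by linarith
  qed
  define Wall where "Wall = (\<Union>z\<in>Omega h. S z)"
  have finWall: "finite Wall" unfolding Wall_def using finO Sfin by blast
  have WallZ: "Wall \<subseteq> Zvec" unfolding Wall_def using SZ by blast
  define H where "H w q = (if w \<in> W q then G q else 0)" for w q
  have inner: "(\<Sum>w\<in>S z. G (rr (z + h *\<^sub>R w))) \<le> (\<Sum>w\<in>Wall. H w (rr (z + h *\<^sub>R w)))" if z: "z \<in> Omega h" for z
  proof -
    have sub: "S z \<subseteq> Wall" unfolding Wall_def using z by blast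
    have "(\<Sum>w\<in>S z. G (rr (z + h *\<^sub>R w))) = (\<Sum>w\<in>Wall \<inter> S z. G (rr (z + h *\<^sub>R w)))"
      using sub by (simp add: Int_absorb1)
    also have "\<dots> = (\<Sum>w\<in>Wall. if w \<in> S z then G (rr (z + h *\<^sub>R w)) else 0)"
      by (rule sum.inter_restrict[OF finWall])
    also have "\<dots> \<le> (\<Sum>w\<in>Wall. H w (rr (z + h *\<^sub>R w)))"
      by (rule sum_mono) (use SW G0 in \<open>auto simp: H_def\<close>)
    finally show ?thesis .
  qed
  have Hq: "(\<Sum>w\<in>Wall. H w q) \<le> 6 * G q" for q
  proof -
    have "(\<Sum>w\<in>Wall. H w q) = (\<Sum>w\<in>Wall \<inter> W q. G q)"
      unfolding H_def by (rule sum.inter_restrict[OF finWall, symmetric])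
    also have "\<dots> = real (card (Wall \<inter> W q)) * G q" by simp
    also have "\<dots> \<le> 6 * G q"
    proof -
      have "card (Wall \<inter> W q) \<le> card (W q)" using finW by (intro card_mono) auto
      then have "card (Wall \<inter> W q) \<le> 6" using finW[of q] by linarith
      then show ?thesis using G0[of q] by (intro mult_right_mono) auto
    qed
    finally show ?thesis .
  qed
  have dbl: "(\<Sum>z\<in>Omega h. \<Sum>w\<in>S z. G (rr (z + h *\<^sub>R w))) \<le> 6 * (\<Sum>q\<in>Omega h. G q)"
  proof -
    have "(\<Sum>z\<in>Omega h. \<Sum>w\<in>S z. G (rr (z + h *\<^sub>R w))) \<le> (\<Sum>z\<in>Omega h. \<Sum>w\<in>Wall. H w (rr (z + h *\<^sub>R w)))"
      by (rule sum_mono) (rule inner)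
    also have "\<dots> = (\<Sum>w\<in>Wall. \<Sum>z\<in>Omega h. H w (rr (z + h *\<^sub>R w)))" by (rule sum.swap)
    also have "\<dots> = (\<Sum>w\<in>Wall. \<Sum>q\<in>Omega h. H w q)"
      by (rule sum.cong[OF refl]) (use WallZ reindex_Omega[OF nn] in blast)
    also have "\<dots> = (\<Sum>q\<in>Omega h. \<Sum>w\<in>Wall. H w q)" by (rule sum.swap)
    also have "\<dots> \<le> (\<Sum>q\<in>Omega h. 6 * G q)" by (rule sum_mono) (rule Hq)
    also have "\<dots> = 6 * (\<Sum>q\<in>Omega h. G q)" by (simp add: sum_distrib_left)
    finally show ?thesis .
  qed
  have "energy W' h u = (\<Sum>z\<in>Omega h. \<Sum>g\<in>W' z. T z g)" unfolding energy_def T_def ..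
  also have "\<dots> \<le> (\<Sum>z\<in>Omega h. 5 * G z + 2 * (\<Sum>w\<in>S z. G (rr (z + h *\<^sub>R w))))"
    by (rule sum_mono) (rule point)
  also have "\<dots> = 5 * (\<Sum>z\<in>Omega h. G z) + 2 * (\<Sum>z\<in>Omega h. \<Sum>w\<in>S z. G (rr (z + h *\<^sub>R w)))"
    by (simp add: sum.distrib sum_distrib_left)
  also have "\<dots> \<le> 5 * (\<Sum>z\<in>Omega h. G z) + 2 * (6 * (\<Sum>q\<in>Omega h. G q))" using dbl by simp
  also have "\<dots> = 17 * (\<Sum>z\<in>Omega h. G z)" by simp
  also have "(\<Sum>z\<in>Omega h. G z) = energy W h u" unfolding energy_def G_def T_def ..
  finally show ?thesis unfolding W_def W'_def .
qed


end
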